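(* Let $\varphi\equiv\bigwedge_{i=1}^t\varphi_i$ be an $X$-positive basic conjunction of spread $m$ and range $r$ over a graph language $L\cup\{X\}$, and let $C,M\notin L\cup\{X\}$ be distinct unary predicate symbols; let $m_i$ be the spread of $\varphi_i$. Let $\varepsilon_1,\varepsilon_2>0$ be reals. Let $G$ be an $L$-interpretation and $\lambda$ a layering of $\overline G$. For an interval $I$ of consecutive integers let $G_I$ denote the $(L\cup\{C,M\})$-interpretation $G[\lambda^{-1}(I)],\ C:=\lambda^{-1}(M_{2r}(I)),\ M:=\lambda^{-1}(M_r(I))$. For each such $I$ and each $t$-tuple $q$ of non-negative integers, let $A_{I,q}$ be undefined if $G_I,X:=V(\overline{G_I})\not\models\varphi^{(q)}$, and otherwise let $A_{I,q}$ be any set with $G_I,X:=A_{I,q}\models\varphi^{(q)}$ and $|A_{I,q}|\le(1+\varepsilon_1)\gamma_{\varphi^{(q)}}(G_I)$. Let $\ell>2r(1+\max(2/\varepsilon_2,6mt))$ be an integer. For an $(\ell,r)$-cover $R$ of integers and a $t$-tuple $p=(p_1,\dots,p_t)$ where each $p_i$ is an $m_i$-plan for $R$, write $p(I)=(p_1(I),\dots,p_t(I))$, let $A_{R,p}=\bigcup_{I\in R}A_{I,p(I)}$ (undefined if some $A_{I,p(I)}$ is undefined) and $a_{R,p}=\sum_{I\in R}|A_{I,p(I)}|$. Let $A=A_{R,p}$ for a choice of $(R,p)$ minimizing $a_{R,p}$ among those for which $A_{R,p}$ is defined ($A$ undefined if there is no such choice). Then either $G,X:=V(\overline G)\not\models\varphi$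 and $A$ is undefined, or $G,X:=A\models\varphi$ and $|A|\le(1+\varepsilon_1)(1+\varepsilon_2)\gamma_\varphi(G)$.
   Context: A graph language $L$ consists of a binary predicate symbol $e$ and a finite set of unary predicate symbols. An $L$-interpretation $G$ consists of a graph $\overline G$ and a set $S_C\subseteq V(\overline G)$ for each unary $C\in L$; $e$ is interpreted as adjacency in $\overline G$. For $S\subseteq V(\overline G)$, $G[S]$ is the interpretation on $\overline G[S]$ with each unary predicate restricted to $S$; "$H, C:=A, M:=B$" denotes the expansion of $H$ with new unary predicates $C,M$ interpreted as $A,B$, and $H,X:=A\models\theta$ means $\theta$ holds when $X$ is interpreted as $A$. A formula is $X$-positive if every occurrence of $X$ is within the scope of an even number of negations. For an $X$-positive sentence $\theta$ and interpretation $H$, $\gamma_\theta(H)$ is the minimum size of $A\subseteq V(\overline H)$ with $H,X:=A\models\theta$. A layering of a graph is a function $\lambda:V\to\mathbb Z$ with $|\lambda(u)-\lambda(v)|\le1$ on edges. $d(x,y)\le r$ abbreviates $(\exists z_0,\dots,z_r)\,z_0=x\land z_r=y\land\bigwedge_{i=1}^r(z_{i-1}=z_i\lor e(z_{i-1},z_i))$. An $r$-local formula is a formula $\psi$ with one free variable $x$ in which all quantifications are of the form $(\exists y: d(x,y)\le r)$ or $(\forall y: d(x,y)\le r)$. A basic existential sentence is one of the form $(\exists x_1,\dots,x_m)\bigwedge_{1\le i<j\le m}d(x_i,x_j)>2r\land\bigwedge_{i=1}^m\psi(x_i)$, and a basic universal sentence is one of the form $(\forall x_1,\dots,x_{m+1})\bigl(\bigwedge_{1\le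 i<j\le m+1}d(x_i,x_j)>2r\bigr)\Rightarrow\bigvee_{i=1}^{m+1}\psi(x_i)$, where in both cases $\psi$ is $r$-local; $m$ is the spread, $r$ the range and $\psi$ the core. A basic conjunction is a conjunction of basic existential and basic universal sentences; its spread and range are the maxima of those of its conjuncts. For a basic existential/universal $\varphi$ and an integer $k\ge0$, the $(C,M,k)$-variant $\varphi^{(k)}$ is $(\exists x_1,\dots,x_k)\bigwedge_{1\le i<j\le k}d(x_i,x_j)>2r\land\bigwedge_{i=1}^k(C(x_i)\land\psi(x_i))$ if $\varphi$ is basic existential, and $(\forall x_1,\dots,x_{k+1})\bigl(\bigwedge_{i=1}^{k+1}M(x_i)\land\bigwedge_{1\le i<j\le k+1}d(x_i,x_j)>2r\bigr)\Rightarrow\bigvee_{i=1}^{k+1}\psi(x_i)$ if basic universal. For a basic conjunction $\varphi\equiv\bigwedge_{i=1}^t\varphi_i$ and a $t$-tuple $q=(q_1,\dots,q_t)$ of non-negative integers, $\varphi^{(q)}\equiv\bigwedge_{i=1}^t\varphi_i^{(q_i)}$. For integers $\ell\ge 2r+1$ and $n$, the set of all intervals $\{i,i+1,\dots,i+\ell-1\}$ with $i\equiv n\pmod{\ell-2r}$ is an $(\ell,r)$-cover of integers (there are exactly $\ell-2r$ distinct ones). For an integer $d\ge0$ and $I=\{i,\dots,i+\ell-1\}$ in a cover, $M_d(I)=\{i+d,\dots,i+\ell-d-1\}$. An $m$-plan for a cover $R$ is a function $p:R\to\mathbb Z_{\ge0}$ with $\sum_{I\in R}p(I)=m$. *)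

theory Defs
  imports Complex_Main
begin

text \<open>An interpretation: a vertex set, an adjacency relation and an interpretation
of every unary predicate symbol (symbols of type 'p).  Only the symbols in the
language matter.\<close>

record ('v, 'p) interp =
  verts :: "'v set"
  adj :: "'v \<Rightarrow> 'v \<Rightarrow> bool"
  upred :: "'p \<Rightarrow> 'v set"

definition L_interp :: "'p set \<Rightarrow> ('v, 'p) interp \<Rightarrow> bool" where
  "L_interp L G \<longleftrightarrow> finite (verts G)
     \<and> (\<forall>u v. adj G u v \<longrightarrow> u \<in> verts G \<and> v \<in> verts G)
     \<and> (\<forall>u v. adj G u v \<longrightarrow> adj G v u)
     \<and> (\<forall>u. \<not> adj G u u)
     \<and> (\<forall>P\<in>L. upred G P \<subseteq> verts G)"

definition expand :: "('v, 'p) interp \<Rightarrow> 'p \<Rightarrow> 'v set \<Rightarrow> ('v, 'p) interp" where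
  "expand H P A = H\<lparr>upred := (upred H)(P := A)\<rparr>"

definition restrict :: "('v, 'p) interp \<Rightarrow> 'v set \<Rightarrow> ('v, 'p) interp" where
  "restrict G S = \<lparr>verts = verts G \<inter> S,
                   adj = (\<lambda>u v. adj G u v \<and> u \<in> S \<and> v \<in> S),
                   upred = (\<lambda>P. upred G P \<inter> S)\<rparr>"

text \<open>Variables are natural numbers.  The atom Dist k a b is the formula abbreviated
by d(a,b) <= k in the paper; its semantics below is literally the unfolding of the
abbreviation.\<close>

datatype 'p fm =
    TT | FF
  | Eq nat nat
  | Edge nat nat
  | Pred 'p nat
  | Dist nat nat nat
  | Neg "'p fm"
  | Conj "'p fm" "'p fm"
  | Disj "'p fm" "'p fm"
  | Imp "'p fm" "'p fm"
  | Ex nat "'p fm"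
  | All nat "'p fm"

fun sat :: "('v, 'p) interp \<Rightarrow> (nat \<Rightarrow> 'v) \<Rightarrow> 'p fm \<Rightarrow> bool" where
  "sat G \<nu> TT = True"
| "sat G \<nu> FF = False"
| "sat G \<nu> (Eq a b) = (\<nu> a = \<nu> b)"
| "sat G \<nu> (Edge a b) = adj G (\<nu> a) (\<nu> b)"
| "sat G \<nu> (Pred P a) = (\<nu> a \<in> upred G P)"
| "sat G \<nu> (Dist k a b) =
     (\<exists>zs. length zs = Suc k \<and> set zs \<subseteq> verts G \<and> zs ! 0 = \<nu> a \<and> zs ! k = \<nu> b
        \<and> (\<forall>i\<in>{1..k}. zs ! (i - 1) = zs ! i \<or> adj G (zs ! (i - 1)) (zs ! i)))"
| "sat G \<nu> (Neg \<phi>) = (\<not> sat G \<nu> \<phi>)"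
| "sat G \<nu> (Conj \<phi> \<psi>) = (sat G \<nu> \<phi> \<and> sat G \<nu> \<psi>)"
| "sat G \<nu> (Disj \<phi> \<psi>) = (sat G \<nu> \<phi> \<or> sat G \<nu> \<psi>)"
| "sat G \<nu> (Imp \<phi> \<psi>) = (sat G \<nu> \<phi> \<longrightarrow> sat G \<nu> \<psi>)"
| "sat G \<nu> (Ex y \<phi>) = (\<exists>v\<in>verts G. sat G (\<nu>(y := v)) \<phi>)"
| "sat G \<nu> (All y \<phi>) = (\<forall>v\<in>verts G. sat G (\<nu>(y := v)) \<phi>)"

text \<open>Truth of a sentence (for sentences the valuation is irrelevant).\<close>
definition models :: "('v, 'p) interp \<Rightarrow> 'p fm \<Rightarrow> bool" where
  "models G \<phi> \<longleftrightarrow> (\<forall>\<nu>. sat G \<nu> \<phi>)"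

fun fv :: "'p fm \<Rightarrow> nat set" where
  "fv TT = {}" | "fv FF = {}"
| "fv (Eq a b) = {a, b}" | "fv (Edge a b) = {a, b}" | "fv (Pred P a) = {a}"
| "fv (Dist k a b) = {a, b}"
| "fv (Neg \<phi>) = fv \<phi>"
| "fv (Conj \<phi> \<psi>) = fv \<phi> \<union> fv \<psi>" | "fv (Disj \<phi> \<psi>) = fv \<phi> \<union> fv \<psi>"
| "fv (Imp \<phi> \<psi>) = fv \<phi> \<union> fv \<psi>"
| "fv (Ex y \<phi>) = fv \<phi> - {y}" | "fv (All y \<phi>) = fv \<phi> - {y}"

fun maxvar :: "'p fm \<Rightarrow> nat" where
  "maxvar TT = 0" | "maxvar FF = 0"
| "maxvar (Eq a b) = max a b" | "maxvar (Edge a b) = max a b" | "maxvar (Pred P a) = a"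
| "maxvar (Dist k a b) = max a b"
| "maxvar (Neg \<phi>) = maxvar \<phi>"
| "maxvar (Conj \<phi> \<psi>) = max (maxvar \<phi>) (maxvar \<psi>)"
| "maxvar (Disj \<phi> \<psi>) = max (maxvar \<phi>) (maxvar \<psi>)"
| "maxvar (Imp \<phi> \<psi>) = max (maxvar \<phi>) (maxvar \<psi>)"
| "maxvar (Ex y \<phi>) = max y (maxvar \<phi>)" | "maxvar (All y \<phi>) = max y (maxvar \<phi>)"

fun preds :: "'p fm \<Rightarrow> 'p set" where
  "preds (Pred P a) = {P}"
| "preds (Neg \<phi>) = preds \<phi>"
| "preds (Conj \<phi> \<psi>) = preds \<phi> \<union> preds \<psi>" | "preds (Disj \<phi> \<psi>) = preds \<phi> \<union> preds \<psi>"
| "preds (Imp \<phi> \<psi>) = preds \<phi> \<union> preds \<psi>"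
| "preds (Ex y \<phi>) = preds \<phi>" | "preds (All y \<phi>) = preds \<phi>"
| "preds _ = {}"

text \<open>Polarity: xpos X phi holds iff every occurrence of X in phi lies in the
scope of an even number of negations (the antecedent of an implication counts
as negated, since A --> B abbreviates (not A) or B); xneg: odd number.\<close>
fun xpos :: "'p \<Rightarrow> 'p fm \<Rightarrow> bool" and xneg :: "'p \<Rightarrow> 'p fm \<Rightarrow> bool" where
  "xpos X (Pred P a) = True"
| "xpos X (Neg \<phi>) = xneg X \<phi>"
| "xpos X (Conj \<phi> \<psi>) = (xpos X \<phi> \<and> xpos X \<psi>)"
| "xpos X (Disj \<phi> \<psi>) = (xpos X \<phi> \<and> xpos X \<psi>)"
| "xpos X (Imp \<phi> \<psi>) = (xneg X \<phi> \<and> xpos X \<psi>)"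
| "xpos X (Ex y \<phi>) = xpos X \<phi>"
| "xpos X (All y \<phi>) = xpos X \<phi>"
| "xpos X _ = True"
| "xneg X (Pred P a) = (P \<noteq> X)"
| "xneg X (Neg \<phi>) = xpos X \<phi>"
| "xneg X (Conj \<phi> \<psi>) = (xneg X \<phi> \<and> xneg X \<psi>)"
| "xneg X (Disj \<phi> \<psi>) = (xneg X \<phi> \<and> xneg X \<psi>)"
| "xneg X (Imp \<phi> \<psi>) = (xpos X \<phi> \<and> xneg X \<psi>)"
| "xneg X (Ex y \<phi>) = xneg X \<phi>"
| "xneg X (All y \<phi>) = xneg X \<phi>"
| "xneg X _ = True"

definition X_positive :: "'p \<Rightarrow> 'p fm \<Rightarrow> bool" where
  "X_positive X \<phi> \<longleftrightarrow> xpos X \<phi>"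

text \<open>Renaming of free variable a into a variable b (used with b not occurring in
the formula, so no capture).\<close>
fun rn :: "nat \<Rightarrow> nat \<Rightarrow> 'p fm \<Rightarrow> 'p fm" where
  "rn a b (Eq u v) = Eq (if u = a then b else u) (if v = a then b else v)"
| "rn a b (Edge u v) = Edge (if u = a then b else u) (if v = a then b else v)"
| "rn a b (Pred P u) = Pred P (if u = a then b else u)"
| "rn a b (Dist k u v) = Dist k (if u = a then b else u) (if v = a then b else v)"
| "rn a b (Neg \<phi>) = Neg (rn a b \<phi>)"
| "rn a b (Conj \<phi> \<psi>) = Conj (rn a b \<phi>) (rn a b \<psi>)"
| "rn a b (Disj \<phi> \<psi>) = Disj (rn a b \<phi>) (rn a b \<psi>)"
| "rn a b (Imp \<phi> \<psi>) = Imp (rn a b \<phi>) (rn a b \<psi>)"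
| "rn a b (Ex y \<phi>) = (if y = a then Ex y \<phi> else Ex y (rn a b \<phi>))"
| "rn a b (All y \<phi>) = (if y = a then All y \<phi> else All y (rn a b \<phi>))"
| "rn a b TT = TT" | "rn a b FF = FF"

definition conj_list :: "'p fm list \<Rightarrow> 'p fm" where
  "conj_list fs = foldr Conj fs TT"
definition disj_list :: "'p fm list \<Rightarrow> 'p fm" where
  "disj_list fs = foldr Disj fs FF"
definition Exs :: "nat list \<Rightarrow> 'p fm \<Rightarrow> 'p fm" where
  "Exs vs \<phi> = foldr Ex vs \<phi>"
definition Alls :: "nat list \<Rightarrow> 'p fm \<Rightarrow> 'p fm" where
  "Alls vs \<phi> = foldr All vs \<phi>"

text \<open>r-local formulas with distinguished variable x: every quantification has the
form (Ex y: d(x,y) <= r) or (All y: d(x,y) <= r), i.e.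
Ex y (d(x,y) <= r /\ theta) resp. All y (d(x,y) <= r --> theta), with y distinct from x;
distance atoms only occur as such guards.\<close>
fun local_fm :: "nat \<Rightarrow> nat \<Rightarrow> 'p fm \<Rightarrow> bool" where
  "local_fm r x (Ex y (Conj (Dist k a b) \<theta>)) =
     (k = r \<and> a = x \<and> b = y \<and> y \<noteq> x \<and> local_fm r x \<theta>)"
| "local_fm r x (Ex y \<phi>) = False"
| "local_fm r x (All y (Imp (Dist k a b) \<theta>)) =
     (k = r \<and> a = x \<and> b = y \<and> y \<noteq> x \<and> local_fm r x \<theta>)"
| "local_fm r x (All y \<phi>) = False"
| "local_fm r x (Dist k a b) = False"
| "local_fm r x (Neg \<phi>) = local_fm r x \<phi>"
| "local_fm r x (Conj \<phi> \<psi>) = (local_fm r x \<phi> \<and> local_fm r x \<psi>)"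
| "local_fm r x (Disj \<phi> \<psi>) = (local_fm r x \<phi> \<and> local_fm r x \<psi>)"
| "local_fm r x (Imp \<phi> \<psi>) = (local_fm r x \<phi> \<and> local_fm r x \<psi>)"
| "local_fm r x TT = True" | "local_fm r x FF = True"
| "local_fm r x (Eq a b) = True" | "local_fm r x (Edge a b) = True"
| "local_fm r x (Pred P a) = True"

text \<open>A basic sentence: BEx m r x psi (basic existential) or BAll m r x psi (basic
universal) with spread m, range r and core psi, an r-local formula in the free
variable x.\<close>
datatype 'p basic = BEx nat nat nat "'p fm" | BAll nat nat nat "'p fm"

fun b_spread :: "'p basic \<Rightarrow> nat" where
  "b_spread (BEx m r x \<psi>) = m" | "b_spread (BAll m r x \<psi>) = m"
fun b_range :: "'p basic \<Rightarrow> nat" where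
  "b_range (BEx m r x \<psi>) = r" | "b_range (BAll m r x \<psi>) = r"
fun b_core :: "'p basic \<Rightarrow> 'p fm" where
  "b_core (BEx m r x \<psi>) = \<psi>" | "b_core (BAll m r x \<psi>) = \<psi>"
fun b_var :: "'p basic \<Rightarrow> nat" where
  "b_var (BEx m r x \<psi>) = x" | "b_var (BAll m r x \<psi>) = x"

definition wf_basic :: "'p basic \<Rightarrow> bool" where
  "wf_basic b \<longleftrightarrow> local_fm (b_range b) (b_var b) (b_core b) \<and> fv (b_core b) \<subseteq> {b_var b}"

definition fresh_vars :: "nat \<Rightarrow> 'p fm \<Rightarrow> nat \<Rightarrow> nat list" where
  "fresh_vars x \<psi> k = [Suc (max x (maxvar \<psi>)) ..< Suc (max x (maxvar \<psi>)) + k]"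

definition far_apart :: "nat \<Rightarrow> nat list \<Rightarrow> 'p fm" where
  "far_apart r vs = conj_list
     [Neg (Dist (2 * r) (vs ! i) (vs ! j)). i \<leftarrow> [0..<length vs], j \<leftarrow> [Suc i..<length vs]]"

fun basic_fm :: "'p basic \<Rightarrow> 'p fm" where
  "basic_fm (BEx m r x \<psi>) = (let vs = fresh_vars x \<psi> m in
      Exs vs (Conj (far_apart r vs) (conj_list (map (\<lambda>v. rn x v \<psi>) vs))))"
| "basic_fm (BAll m r x \<psi>) = (let vs = fresh_vars x \<psi> (Suc m) in
      Alls vs (Imp (far_apart r vs) (disj_list (map (\<lambda>v. rn x v \<psi>) vs))))"

fun variant :: "'p \<Rightarrow> 'p \<Rightarrow> nat \<Rightarrow> 'p basic \<Rightarrow> 'p fm" where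
  "variant C M k (BEx m r x \<psi>) = (let vs = fresh_vars x \<psi> k in
      Exs vs (Conj (far_apart r vs) (conj_list (map (\<lambda>v. Conj (Pred C v) (rn x v \<psi>)) vs))))"
| "variant C M k (BAll m r x \<psi>) = (let vs = fresh_vars x \<psi> (Suc k) in
      Alls vs (Imp (Conj (conj_list (map (Pred M) vs)) (far_apart r vs))
                   (disj_list (map (\<lambda>v. rn x v \<psi>) vs))))"

definition bconj_fm :: "'p basic list \<Rightarrow> 'p fm" where
  "bconj_fm bs = conj_list (map basic_fm bs)"
definition bconj_spread :: "'p basic list \<Rightarrow> nat" where
  "bconj_spread bs = foldr max (map b_spread bs) 0"
definition bconj_range :: "'p basic list \<Rightarrow> nat" where
  "bconj_range bs = foldr max (map b_range bs) 0"
definition bconj_variant :: "'p \<Rightarrow> 'p \<Rightarrow> 'p basic list \<Rightarrow> nat list \<Rightarrow> 'p fm" where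
  "bconj_variant C M bs q = conj_list (map2 (variant C M) q bs)"

definition gamma :: "('v, 'p) interp \<Rightarrow> 'p \<Rightarrow> 'p fm \<Rightarrow> nat" where
  "gamma H X \<theta> = (LEAST k. \<exists>A\<subseteq>verts H. card A = k \<and> models (expand H X A) \<theta>)"

definition layering :: "('v, 'p) interp \<Rightarrow> ('v \<Rightarrow> int) \<Rightarrow> bool" where
  "layering G lam \<longleftrightarrow> (\<forall>u v. adj G u v \<longrightarrow> \<bar>lam u - lam v\<bar> \<le> 1)"

definition layer_pre :: "('v, 'p) interp \<Rightarrow> ('v \<Rightarrow> int) \<Rightarrow> int set \<Rightarrow> 'v set" where
  "layer_pre G lam J = {v \<in> verts G. lam v \<in> J}"

definition mid :: "nat \<Rightarrow> int set \<Rightarrow> int set" where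
  "mid d I = {Min I + int d .. Max I - int d}"

definition G_sub :: "('v, 'p) interp \<Rightarrow> ('v \<Rightarrow> int) \<Rightarrow> nat \<Rightarrow> 'p \<Rightarrow> 'p \<Rightarrow> int set
                      \<Rightarrow> ('v, 'p) interp" where
  "G_sub G lam r C M I =
     expand (expand (restrict G (layer_pre G lam I)) C (layer_pre G lam (mid (2 * r) I)))
            M (layer_pre G lam (mid r I))"

definition ivl :: "int \<Rightarrow> int \<Rightarrow> int set" where
  "ivl i l = {i .. i + l - 1}"

definition cover :: "int \<Rightarrow> nat \<Rightarrow> int \<Rightarrow> int set set" where
  "cover l r n = {ivl i l | i. i mod (l - 2 * int r) = n mod (l - 2 * int r)}"

definition is_cover :: "int \<Rightarrow> nat \<Rightarrow> int set set \<Rightarrow> bool" where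
  "is_cover l r R \<longleftrightarrow> (\<exists>n. R = cover l r n)"

text \<open>m-plan: non-negative integer values on R summing to m (so only finitely many
are nonzero; the sum is taken over the finite support).\<close>
definition plan :: "int set set \<Rightarrow> nat \<Rightarrow> (int set \<Rightarrow> nat) \<Rightarrow> bool" where
  "plan R m p \<longleftrightarrow> finite {I \<in> R. p I \<noteq> 0} \<and> (\<Sum>I\<in>{I \<in> R. p I \<noteq> 0}. p I) = m"

text \<open>A_{R,p}, a_{R,p} for a selection Asel of the sets A_{I,q} (None = undefined).\<close>
definition A_Rp :: "(int set \<Rightarrow> nat list \<Rightarrow> 'v set option) \<Rightarrow> int set set
                    \<Rightarrow> (int set \<Rightarrow> nat) list \<Rightarrow> 'v set" where
  "A_Rp Asel R ps = (\<Union>I\<in>R. the (Asel I (map (\<lambda>f. f I) ps)))"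

text \<open>Sum over I in R of |A_{I,p(I)}| (taken over the terms that are nonzero).\<close>
definition a_Rp :: "(int set \<Rightarrow> nat list \<Rightarrow> 'v set option) \<Rightarrow> int set set
                    \<Rightarrow> (int set \<Rightarrow> nat) list \<Rightarrow> nat" where
  "a_Rp Asel R ps = (\<Sum>I\<in>{I \<in> R. card (the (Asel I (map (\<lambda>f. f I) ps))) \<noteq> 0}.
                        card (the (Asel I (map (\<lambda>f. f I) ps))))"

definition admissible :: "(int set \<Rightarrow> nat list \<Rightarrow> 'v set option) \<Rightarrow> int \<Rightarrow> nat
                          \<Rightarrow> 'p basic list \<Rightarrow> (int set set \<times> (int set \<Rightarrow> nat) list) set" where
  "admissible Asel l r bs = {(R, ps). is_cover l r R \<and> length ps = length bs
       \<and> (\<forall>i<length bs. plan R (b_spread (bs ! i)) (ps ! i))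
       \<and> (\<forall>I\<in>R. Asel I (map (\<lambda>f. f I) ps) \<noteq> None)}"

end

theory Submission
  imports Defs
begin


definition dle :: "('v, 'p) interp \<Rightarrow> nat \<Rightarrow> 'v \<Rightarrow> 'v \<Rightarrow> bool" where
  "dle G k a b \<longleftrightarrow> (\<exists>zs. length zs = Suc k \<and> set zs \<subseteq> verts G \<and> zs ! 0 = a \<and> zs ! k = b
        \<and> (\<forall>i\<in>{1..k}. zs ! (i - 1) = zs ! i \<or> adj G (zs ! (i - 1)) (zs ! i)))"

lemma sat_Dist: "sat G \<nu> (Dist k a b) = dle G k (\<nu> a) (\<nu> b)"
  by (simp add: dle_def)

lemma dle_refl: "a \<in> verts G \<Longrightarrow> dle G k a a"
  unfolding dle_def by (rule exI[of _ "replicate (Suc k) a"]) (auto simp: nth_Cons')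

lemma dle_verts: "dle G k a b \<Longrightarrow> a \<in> verts G \<and> b \<in> verts G"
  unfolding dle_def by (auto dest!: nth_mem)

lemma path_layer:
  assumes "layering G lam" "length zs = Suc k" "zs ! 0 = a"
    "\<forall>i\<in>{1..k}. zs ! (i - 1) = zs ! i \<or> adj G (zs ! (i - 1)) (zs ! i)"
  shows "i \<le> k \<Longrightarrow> \<bar>lam (zs ! i) - lam a\<bar> \<le> int i"
proof (induction i)
  case 0 then show ?case using assms by simp
next
  case (Suc i)
  have "zs ! i = zs ! Suc i \<or> adj G (zs ! i) (zs ! Suc i)"
    using assms(4) Suc.prems by (metis atLeastAtMost_iff diff_Suc_1 le_add1 plus_1_eq_Suc)
  then have "\<bar>lam (zs ! Suc i) - lam (zs ! i)\<bar> \<le> 1"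
    using assms(1) unfolding layering_def by (metis abs_minus_commute abs_zero diff_self zero_le_one)
  then show ?case using Suc by auto
qed

lemma dle_layer: "layering G lam \<Longrightarrow> dle G k a b \<Longrightarrow> \<bar>lam a - lam b\<bar> \<le> int k"
  unfolding dle_def using path_layer[of G lam _ k a k]
  by (metis abs_minus_commute order_refl)

lemma dle_sym:
  assumes "\<forall>u v. adj G u v \<longrightarrow> adj G v u" "dle G k a b"
  shows "dle G k b a"
proof -
  obtain zs where z: "length zs = Suc k" "set zs \<subseteq> verts G" "zs ! 0 = a" "zs ! k = b"
    "\<forall>i\<in>{1..k}. zs ! (i - 1) = zs ! i \<or> adj G (zs ! (i - 1)) (zs ! i)"
    using assms(2) unfolding dle_def by blast
  show ?thesis unfolding dle_def
  proof (intro exI[of _ "rev zs"] conjI ballI)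
    show "length (rev zs) = Suc k" using z by simp
    show "set (rev zs) \<subseteq> verts G" using z by simp
    show "rev zs ! 0 = b" using z by (simp add: rev_nth)
    show "rev zs ! k = a" using z by (simp add: rev_nth)
    fix i assume i: "i \<in> {1..k}"
    have e1: "rev zs ! (i - 1) = zs ! (k - i + 1)"
    proof -
      have "rev zs ! (i - 1) = zs ! (length zs - Suc (i - 1))" using z i by (subst rev_nth) auto
      moreover have "length zs - Suc (i - 1) = k - i + 1" using z i by auto
      ultimately show ?thesis by simp
    qed
    have e2: "rev zs ! i = zs ! (k - i)" using z i by (simp add: rev_nth)
    have "k - i + 1 \<in> {1..k}" using i by auto
    then have "zs ! (k - i) = zs ! (k - i + 1) \<or> adj G (zs ! (k - i)) (zs ! (k - i + 1))"
      using z(5) by fastforce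
    then show "rev zs ! (i - 1) = rev zs ! i \<or> adj G (rev zs ! (i - 1)) (rev zs ! i)"
      using e1 e2 assms(1) by metis
  qed
qed

lemma dle_mono_graph:
  assumes "verts H \<subseteq> verts G" "\<forall>u v. adj H u v \<longrightarrow> adj G u v" "dle H k a b"
  shows "dle G k a b"
  using assms unfolding dle_def by blast

lemma dle_sub:
  assumes "layering G lam" "verts H = verts G \<inter> S"
    "\<forall>u w. adj H u w \<longleftrightarrow> adj G u w \<and> u \<in> S \<and> w \<in> S"
    "\<forall>w\<in>verts G. \<bar>lam w - lam a\<bar> \<le> int k \<longrightarrow> w \<in> S"
    "dle G k a b"
  shows "dle H k a b"
proof -
  obtain zs where z: "length zs = Suc k" "set zs \<subseteq> verts G" "zs ! 0 = a" "zs ! k = b"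
    "\<forall>i\<in>{1..k}. zs ! (i - 1) = zs ! i \<or> adj G (zs ! (i - 1)) (zs ! i)"
    using assms(5) unfolding dle_def by blast
  have inS: "i \<le> k \<Longrightarrow> zs ! i \<in> S" for i
    using path_layer[OF assms(1) z(1) z(3) z(5), of i] assms(4) z(1,2)
    by (metis le_imp_less_Suc nth_mem order_trans subsetD of_nat_mono)
  show ?thesis unfolding dle_def
  proof (intro exI[of _ zs] conjI ballI)
    show "set zs \<subseteq> verts H"
    proof
      fix w assume "w \<in> set zs"
      then obtain i where "i < length zs" "w = zs ! i" by (auto simp: in_set_conv_nth)
      then show "w \<in> verts H" using inS[of i] z assms(2) by auto
    qed
    fix i assume i: "i \<in> {1..k}"
    then show "zs ! (i - 1) = zs ! i \<or> adj H (zs ! (i - 1)) (zs ! i)"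
      using z(5) inS[of i] inS[of "i - 1"] assms(3) by auto
  qed (use z in auto)
qed

section \<open>Free variables, renaming\<close>

lemma sat_fv: "(\<forall>z\<in>fv \<phi>. \<nu> z = \<nu>' z) \<Longrightarrow> sat G \<nu> \<phi> = sat G \<nu>' \<phi>"
proof (induction \<phi> arbitrary: \<nu> \<nu>')
  case (Ex y \<phi>)
  have "\<And>v. sat G (\<nu>(y := v)) \<phi> = sat G (\<nu>'(y := v)) \<phi>"
    by (rule Ex.IH) (use Ex.prems in auto)
  then show ?case by simp
next
  case (All y \<phi>)
  have "\<And>v. sat G (\<nu>(y := v)) \<phi> = sat G (\<nu>'(y := v)) \<phi>"
    by (rule All.IH) (use All.prems in auto)
  then show ?case by simp
next
  case (Neg \<phi>) then show ?case by fastforce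
next
  case (Conj \<phi>1 \<phi>2)
  have "sat G \<nu> \<phi>1 = sat G \<nu>' \<phi>1" "sat G \<nu> \<phi>2 = sat G \<nu>' \<phi>2"
    using Conj.IH Conj.prems by auto
  then show ?case by simp
next
  case (Disj \<phi>1 \<phi>2)
  have "sat G \<nu> \<phi>1 = sat G \<nu>' \<phi>1" "sat G \<nu> \<phi>2 = sat G \<nu>' \<phi>2"
    using Disj.IH Disj.prems by auto
  then show ?case by simp
next
  case (Imp \<phi>1 \<phi>2)
  have "sat G \<nu> \<phi>1 = sat G \<nu>' \<phi>1" "sat G \<nu> \<phi>2 = sat G \<nu>' \<phi>2"
    using Imp.IH Imp.prems by auto
  then show ?case by simp
qed (auto simp: sat_Dist)

lemma sat_rn: "maxvar \<psi> < v \<Longrightarrow> x < v \<Longrightarrow> sat G \<nu> (rn x v \<psi>) = sat G (\<nu>(x := \<nu> v)) \<psi>"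
proof (induction \<psi> arbitrary: \<nu>)
  case (Ex y \<phi>)
  show ?case
  proof (cases "y = x")
    case True
    have "rn x v (Ex y \<phi>) = Ex y \<phi>" using True by simp
    moreover have "sat G \<nu> (Ex y \<phi>) = sat G (\<nu>(x := \<nu> v)) (Ex y \<phi>)"
      by (rule sat_fv) (use True in auto)
    ultimately show ?thesis by metis
  next
    case False
    have "\<And>w. sat G (\<nu>(y := w)) (rn x v \<phi>) = sat G ((\<nu>(x := \<nu> v))(y := w)) \<phi>"
    proof -
      fix w
      have "sat G (\<nu>(y := w)) (rn x v \<phi>) = sat G ((\<nu>(y := w))(x := (\<nu>(y := w)) v)) \<phi>"
        by (rule Ex.IH) (use Ex.prems in auto)
      also have "(\<nu>(y := w))(x := (\<nu>(y := w)) v) = (\<nu>(x := \<nu> v))(y := w)"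
        using False Ex.prems by (auto simp: fun_eq_iff)
      finally show "sat G (\<nu>(y := w)) (rn x v \<phi>) = sat G ((\<nu>(x := \<nu> v))(y := w)) \<phi>" .
    qed
    then show ?thesis using False by (simp del: fun_upd_apply)
  qed
next
  case (All y \<phi>)
  show ?case
  proof (cases "y = x")
    case True
    have "rn x v (All y \<phi>) = All y \<phi>" using True by simp
    moreover have "sat G \<nu> (All y \<phi>) = sat G (\<nu>(x := \<nu> v)) (All y \<phi>)"
      by (rule sat_fv) (use True in auto)
    ultimately show ?thesis by metis
  next
    case False
    have "\<And>w. sat G (\<nu>(y := w)) (rn x v \<phi>) = sat G ((\<nu>(x := \<nu> v))(y := w)) \<phi>"
    proof -
      fix w
      have "sat G (\<nu>(y := w)) (rn x v \<phi>) = sat G ((\<nu>(y := w))(x := (\<nu>(y := w)) v)) \<phi>"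
        by (rule All.IH) (use All.prems in auto)
      also have "(\<nu>(y := w))(x := (\<nu>(y := w)) v) = (\<nu>(x := \<nu> v))(y := w)"
        using False All.prems by (auto simp: fun_eq_iff)
      finally show "sat G (\<nu>(y := w)) (rn x v \<phi>) = sat G ((\<nu>(x := \<nu> v))(y := w)) \<phi>" .
    qed
    then show ?thesis using False by (simp del: fun_upd_apply)
  qed
qed (auto simp: dle_def)

lemma preds_rn: "preds (rn x v \<psi>) = preds \<psi>"
  by (induction \<psi>) auto

lemma xpos_rn: "(xpos X (rn x v \<psi>) = xpos X \<psi>) \<and> (xneg X (rn x v \<psi>) = xneg X \<psi>)"
  by (induction \<psi>) auto

section \<open>Monotonicity\<close>

lemma verts_expand[simp]: "verts (expand H P A) = verts H"
  and adj_expand[simp]: "adj (expand H P A) = adj H"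
  and upred_expand[simp]: "upred (expand H P A) Q = (if Q = P then A else upred H Q)"
  by (auto simp: expand_def)

lemma dle_expand[simp]: "dle (expand H P A) k a b = dle H k a b"
  by (simp add: dle_def)

lemma sat_mono_both:
  assumes "A \<subseteq> B"
  shows "(xpos X \<phi> \<longrightarrow> (\<forall>\<nu>. sat (expand H X A) \<nu> \<phi> \<longrightarrow> sat (expand H X B) \<nu> \<phi>))
       \<and> (xneg X \<phi> \<longrightarrow> (\<forall>\<nu>. sat (expand H X B) \<nu> \<phi> \<longrightarrow> sat (expand H X A) \<nu> \<phi>))"
proof (induction \<phi>)
  case (Pred P a) then show ?case using assms by auto
next
  case (Neg \<phi>) then show ?case by fastforce
next
  case (Conj \<phi>1 \<phi>2) then show ?case by fastforce
next
  case (Disj \<phi>1 \<phi>2) then show ?case by fastforce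
next
  case (Imp \<phi>1 \<phi>2) then show ?case by fastforce
next
  case (Ex y \<phi>) then show ?case by fastforce
next
  case (All y \<phi>) then show ?case by fastforce
qed (simp_all add: sat_Dist)

lemma sat_mono:
  "xpos X \<phi> \<Longrightarrow> A \<subseteq> B \<Longrightarrow> sat (expand H X A) \<nu> \<phi> \<Longrightarrow> sat (expand H X B) \<nu> \<phi>"
  using sat_mono_both[of A B X \<phi> H] by blast


fun updl :: "(nat \<Rightarrow> 'v) \<Rightarrow> nat list \<Rightarrow> 'v list \<Rightarrow> nat \<Rightarrow> 'v" where
  "updl \<nu> (v # vs) (w # ws) = updl (\<nu>(v := w)) vs ws"
| "updl \<nu> _ _ = \<nu>"

lemma sat_Exs: "sat G \<nu> (Exs vs \<phi>) =
   (\<exists>ws. length ws = length vs \<and> set ws \<subseteq> verts G \<and> sat G (updl \<nu> vs ws) \<phi>)"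
proof (induction vs arbitrary: \<nu>)
  case Nil then show ?case by (simp add: Exs_def)
next
  case (Cons v vs)
  have "sat G \<nu> (Exs (v # vs) \<phi>) = (\<exists>w\<in>verts G. sat G (\<nu>(v := w)) (Exs vs \<phi>))"
    by (simp add: Exs_def)
  also have "\<dots> = (\<exists>w\<in>verts G. \<exists>ws. length ws = length vs \<and> set ws \<subseteq> verts G
                      \<and> sat G (updl (\<nu>(v := w)) vs ws) \<phi>)"
    by (simp only: Cons.IH)
  also have "\<dots> = (\<exists>ws. length ws = length (v # vs) \<and> set ws \<subseteq> verts G \<and> sat G (updl \<nu> (v # vs) ws) \<phi>)"
  proof
    assume "\<exists>w\<in>verts G. \<exists>ws. length ws = length vs \<and> set ws \<subseteq> verts G \<and> sat G (updl (\<nu>(v := w)) vs ws) \<phi>"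
    then obtain w ws where "w \<in> verts G" "length ws = length vs" "set ws \<subseteq> verts G"
      "sat G (updl (\<nu>(v := w)) vs ws) \<phi>" by blast
    then show "\<exists>ws. length ws = length (v # vs) \<and> set ws \<subseteq> verts G \<and> sat G (updl \<nu> (v # vs) ws) \<phi>"
      by (intro exI[of _ "w # ws"]) auto
  next
    assume "\<exists>ws. length ws = length (v # vs) \<and> set ws \<subseteq> verts G \<and> sat G (updl \<nu> (v # vs) ws) \<phi>"
    then obtain ws where ws: "length ws = length (v # vs)" "set ws \<subseteq> verts G" "sat G (updl \<nu> (v # vs) ws) \<phi>"
      by blast
    then obtain y ys where "ws = y # ys" by (cases ws) auto
    then show "\<exists>w\<in>verts G. \<exists>ws. length ws = length vs \<and> set ws \<subseteq> verts G \<and> sat G (updl (\<nu>(v := w)) vs ws) \<phi>"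
      using ws by auto
  qed
  finally show ?case .
qed

lemma sat_Alls: "sat G \<nu> (Alls vs \<phi>) =
   (\<forall>ws. length ws = length vs \<and> set ws \<subseteq> verts G \<longrightarrow> sat G (updl \<nu> vs ws) \<phi>)"
proof (induction vs arbitrary: \<nu>)
  case Nil then show ?case by (simp add: Alls_def)
next
  case (Cons v vs)
  have "sat G \<nu> (Alls (v # vs) \<phi>) = (\<forall>w\<in>verts G. sat G (\<nu>(v := w)) (Alls vs \<phi>))"
    by (simp add: Alls_def)
  also have "\<dots> = (\<forall>w\<in>verts G. \<forall>ws. length ws = length vs \<and> set ws \<subseteq> verts G
                      \<longrightarrow> sat G (updl (\<nu>(v := w)) vs ws) \<phi>)"
    by (simp only: Cons.IH)
  also have "\<dots> = (\<forall>ws. length ws = length (v # vs) \<and> set ws \<subseteq> verts G \<longrightarrow> sat G (updl \<nu> (v # vs) ws) \<phi>)"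
  proof
    assume A: "\<forall>w\<in>verts G. \<forall>ws. length ws = length vs \<and> set ws \<subseteq> verts G \<longrightarrow> sat G (updl (\<nu>(v := w)) vs ws) \<phi>"
    show "\<forall>ws. length ws = length (v # vs) \<and> set ws \<subseteq> verts G \<longrightarrow> sat G (updl \<nu> (v # vs) ws) \<phi>"
    proof (intro allI impI)
      fix ws assume ws: "length ws = length (v # vs) \<and> set ws \<subseteq> verts G"
      then obtain y ys where "ws = y # ys" by (cases ws) auto
      then show "sat G (updl \<nu> (v # vs) ws) \<phi>" using ws A by auto
    qed
  next
    assume A: "\<forall>ws. length ws = length (v # vs) \<and> set ws \<subseteq> verts G \<longrightarrow> sat G (updl \<nu> (v # vs) ws) \<phi>"
    show "\<forall>w\<in>verts G. \<forall>ws. length ws = length vs \<and> set ws \<subseteq> verts G \<longrightarrow> sat G (updl (\<nu>(v := w)) vs ws) \<phi>"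
    proof (intro ballI allI impI)
      fix w ws assume "w \<in> verts G" "length ws = length vs \<and> set ws \<subseteq> verts G"
      then show "sat G (updl (\<nu>(v := w)) vs ws) \<phi>" using A[rule_format, of "w # ws"] by auto
    qed
  qed
  finally show ?case .
qed

lemma updl_map: "distinct vs \<Longrightarrow> length ws = length vs \<Longrightarrow> map (updl \<nu> vs ws) vs = ws"
proof (induction vs arbitrary: \<nu> ws)
  case Nil then show ?case by simp
next
  case (Cons v vs)
  then obtain w ws' where ws: "ws = w # ws'" by (cases ws) auto
  have other: "z \<notin> set us \<Longrightarrow> updl \<mu> us xs z = \<mu> z" for z us xs and \<mu> :: "nat \<Rightarrow> 'a"
    by (induction \<mu> us xs rule: updl.induct) auto
  show ?case using Cons ws other[of v vs "\<nu>(v := w)" ws'] by simp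
qed

lemma updl_nth: "distinct vs \<Longrightarrow> length ws = length vs \<Longrightarrow> i < length vs \<Longrightarrow> updl \<nu> vs ws (vs ! i) = ws ! i"
  using updl_map by (metis nth_map)

lemma updl_set: "distinct vs \<Longrightarrow> length ws = length vs \<Longrightarrow> updl \<nu> vs ws ` set vs = set ws"
  using updl_map by (metis list.set_map)

lemma sat_conj_list: "sat G \<nu> (conj_list fs) = (\<forall>f\<in>set fs. sat G \<nu> f)"
  by (induct fs) (auto simp: conj_list_def)

lemma sat_disj_list: "sat G \<nu> (disj_list fs) = (\<exists>f\<in>set fs. sat G \<nu> f)"
  by (induct fs) (auto simp: disj_list_def)

lemma sat_far_apart: "sat G \<nu> (far_apart r vs) =
   (\<forall>i j. i < j \<longrightarrow> j < length vs \<longrightarrow> \<not> dle G (2 * r) (\<nu> (vs ! i)) (\<nu> (vs ! j)))"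
proof -
  define xs :: "'b fm list" where "xs = [Neg (Dist (2 * r) (vs ! i) (vs ! j)). i \<leftarrow> [0..<length vs], j \<leftarrow> [Suc i..<length vs]]"
  have mem: "Neg (Dist (2 * r) (vs ! i) (vs ! j)) \<in> set xs" if "i < j" "j < length vs" for i j
  proof -
    have "i \<in> set [0..<length vs]" "j \<in> set [Suc i..<length vs]" using that by auto
    then show ?thesis unfolding xs_def set_concat set_map image_image UN_iff
      by (intro bexI[of _ i]) auto
  qed
  have mem2: "\<exists>i j. i < j \<and> j < length vs \<and> f = Neg (Dist (2 * r) (vs ! i) (vs ! j))" if "f \<in> set xs" for f
  proof -
    from that have "\<exists>i\<in>set [0..<length vs]. \<exists>j\<in>set [Suc i..<length vs]. f = Neg (Dist (2 * r) (vs ! i) (vs ! j))"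
      unfolding xs_def set_concat set_map image_image UN_iff image_iff .
    then obtain i j where "i \<in> set [0..<length vs]" "j \<in> set [Suc i..<length vs]"
      "f = Neg (Dist (2 * r) (vs ! i) (vs ! j))" by blast
    then show ?thesis by (intro exI[of _ i] exI[of _ j]) simp
  qed
  have "sat G \<nu> (far_apart r vs) = (\<forall>f\<in>set xs. sat G \<nu> f)"
    unfolding far_apart_def sat_conj_list xs_def ..
  also have "\<dots> = (\<forall>i j. i < j \<longrightarrow> j < length vs \<longrightarrow> sat G \<nu> (Neg (Dist (2 * r) (vs ! i) (vs ! j))))"
    using mem mem2 by blast
  also have "\<dots> = (\<forall>i j. i < j \<longrightarrow> j < length vs \<longrightarrow> \<not> dle G (2 * r) (\<nu> (vs ! i)) (\<nu> (vs ! j)))"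
    by (simp only: sat.simps(7) sat_Dist)
  finally show ?thesis .
qed

definition core_at :: "('v, 'p) interp \<Rightarrow> 'p fm \<Rightarrow> 'v \<Rightarrow> bool" where
  "core_at G \<psi> w = sat G (\<lambda>_. w) \<psi>"

lemma sat_rn_core: "fv \<psi> \<subseteq> {x} \<Longrightarrow> maxvar \<psi> < v \<Longrightarrow> x < v \<Longrightarrow> sat G \<nu> (rn x v \<psi>) = core_at G \<psi> (\<nu> v)"
proof -
  assume a: "fv \<psi> \<subseteq> {x}" "maxvar \<psi> < v" "x < v"
  have "sat G \<nu> (rn x v \<psi>) = sat G (\<nu>(x := \<nu> v)) \<psi>" using sat_rn a by blast
  also have "\<dots> = sat G (\<lambda>_. \<nu> v) \<psi>" by (rule sat_fv) (use a in auto)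
  finally show ?thesis unfolding core_at_def .
qed

lemma fresh_vars_props:
  "distinct (fresh_vars x \<psi> k)" "length (fresh_vars x \<psi> k) = k"
  "v \<in> set (fresh_vars x \<psi> k) \<Longrightarrow> maxvar \<psi> < v \<and> x < v"
  by (auto simp: fresh_vars_def simp del: upt_Suc)

lemma fresh_vars_nth: "i < k \<Longrightarrow> fresh_vars x \<psi> k ! i = Suc (max x (maxvar \<psi>)) + i"
  by (simp add: fresh_vars_def del: upt_Suc)

definition farset :: "('v, 'p) interp \<Rightarrow> nat \<Rightarrow> 'v set \<Rightarrow> bool" where
  "farset G d W \<longleftrightarrow> (\<forall>u\<in>W. \<forall>w\<in>W. u \<noteq> w \<longrightarrow> \<not> dle G d u w)"

lemma list_set_ex:
  assumes sym: "\<forall>u v. adj G u v \<longrightarrow> adj G v u"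
  shows "(\<exists>ws. length ws = k \<and> set ws \<subseteq> verts G \<and> (\<forall>i j. i < j \<longrightarrow> j < k \<longrightarrow> \<not> dle G d (ws ! i) (ws ! j))
            \<and> (\<forall>w\<in>set ws. Q w))
     \<longleftrightarrow> (\<exists>W\<subseteq>verts G. finite W \<and> card W = k \<and> farset G d W \<and> (\<forall>w\<in>W. Q w))"
proof
  assume "\<exists>ws. length ws = k \<and> set ws \<subseteq> verts G \<and> (\<forall>i j. i < j \<longrightarrow> j < k \<longrightarrow> \<not> dle G d (ws ! i) (ws ! j))
            \<and> (\<forall>w\<in>set ws. Q w)"
  then obtain ws where w: "length ws = k" "set ws \<subseteq> verts G"
    "\<forall>i j. i < j \<longrightarrow> j < k \<longrightarrow> \<not> dle G d (ws ! i) (ws ! j)" "\<forall>w\<in>set ws. Q w" by blast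
  have pair: "i < k \<Longrightarrow> j < k \<Longrightarrow> i \<noteq> j \<Longrightarrow> \<not> dle G d (ws ! i) (ws ! j)" for i j
  proof (cases "i < j")
    case True then show "i < k \<Longrightarrow> j < k \<Longrightarrow> i \<noteq> j \<Longrightarrow> \<not> dle G d (ws ! i) (ws ! j)" using w(3) by blast
  next
    case False
    assume "i < k" "j < k" "i \<noteq> j"
    then have "\<not> dle G d (ws ! j) (ws ! i)" using w(3) False by auto
    then show "\<not> dle G d (ws ! i) (ws ! j)" using dle_sym[OF sym] by blast
  qed
  have dist: "distinct ws"
    unfolding distinct_conv_nth
  proof (intro allI impI)
    fix i j assume ij: "i < length ws" "j < length ws" "i \<noteq> j"
    show "ws ! i \<noteq> ws ! j"
    proof
      assume eq: "ws ! i = ws ! j"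
      have "ws ! i \<in> verts G" using ij w(2) nth_mem by blast
      then have "dle G d (ws ! i) (ws ! j)" using eq dle_refl by metis
      then show False using pair ij w(1) by blast
    qed
  qed
  show "\<exists>W\<subseteq>verts G. finite W \<and> card W = k \<and> farset G d W \<and> (\<forall>w\<in>W. Q w)"
  proof (intro exI[of _ "set ws"] conjI)
    show "card (set ws) = k" using dist w(1) distinct_card by blast
    show "farset G d (set ws)" unfolding farset_def
      using pair w(1) by (metis in_set_conv_nth)
  qed (use w in auto)
next
  assume "\<exists>W\<subseteq>verts G. finite W \<and> card W = k \<and> farset G d W \<and> (\<forall>w\<in>W. Q w)"
  then obtain W where W: "W \<subseteq> verts G" "finite W" "card W = k" "farset G d W" "\<forall>w\<in>W. Q w" by blast
  obtain ws where ws: "set ws = W" "distinct ws" using finite_distinct_list[OF W(2)] by blast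
  have len: "length ws = k" using ws W(3) distinct_card by metis
  show "\<exists>ws. length ws = k \<and> set ws \<subseteq> verts G \<and> (\<forall>i j. i < j \<longrightarrow> j < k \<longrightarrow> \<not> dle G d (ws ! i) (ws ! j))
            \<and> (\<forall>w\<in>set ws. Q w)"
  proof (intro exI[of _ ws] conjI allI impI)
    fix i j assume "i < j" "j < k"
    then have "ws ! i \<noteq> ws ! j" "ws ! i \<in> W" "ws ! j \<in> W"
      using ws len by (auto simp: nth_eq_iff_index_eq)
    then show "\<not> dle G d (ws ! i) (ws ! j)" using W(4) unfolding farset_def by blast
  qed (use ws W len in auto)
qed

definition pw :: "('v, 'p) interp \<Rightarrow> nat \<Rightarrow> 'v list \<Rightarrow> bool" where
  "pw G d ws \<longleftrightarrow> (\<forall>i j. i < j \<longrightarrow> j < length ws \<longrightarrow> \<not> dle G d (ws ! i) (ws ! j))"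

lemma far_upd:
  assumes "distinct vs" "length ws = length vs"
  shows "sat G (updl \<nu> vs ws) (far_apart r vs) = pw G (2 * r) ws"
  unfolding sat_far_apart pw_def using updl_nth[OF assms] assms(2) by auto

lemma core_upd:
  assumes "fv \<psi> \<subseteq> {x}" "vs = fresh_vars x \<psi> k" "length ws = k"
  shows "v \<in> set vs \<Longrightarrow> sat G (updl \<nu> vs ws) (rn x v \<psi>) = core_at G \<psi> (updl \<nu> vs ws v)"
    and "set ws = updl \<nu> vs ws ` set vs"
proof -
  have d: "distinct vs" "length ws = length vs"
    using assms(2,3) fresh_vars_props(1,2)[of x \<psi> k] by simp_all
  show "v \<in> set vs \<Longrightarrow> sat G (updl \<nu> vs ws) (rn x v \<psi>) = core_at G \<psi> (updl \<nu> vs ws v)"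
    using sat_rn_core[OF assms(1)] fresh_vars_props(3) assms(2) by blast
  show "set ws = updl \<nu> vs ws ` set vs" using updl_set[OF d] by simp
qed

lemma sat_basic_BEx:
  assumes "fv \<psi> \<subseteq> {x}"
  shows "sat G \<nu> (basic_fm (BEx m r x \<psi>)) =
    (\<exists>ws. length ws = m \<and> set ws \<subseteq> verts G \<and> pw G (2 * r) ws \<and> (\<forall>w\<in>set ws. core_at G \<psi> w))"
proof -
  define vs where "vs = fresh_vars x \<psi> m"
  have d: "distinct vs" "length vs = m" using fresh_vars_props vs_def by auto
  have "sat G \<nu> (basic_fm (BEx m r x \<psi>)) = (\<exists>ws. length ws = m \<and> set ws \<subseteq> verts G \<and>
     sat G (updl \<nu> vs ws) (far_apart r vs) \<and> (\<forall>v\<in>set vs. sat G (updl \<nu> vs ws) (rn x v \<psi>) \<and> True))"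
    by (simp add: vs_def[symmetric] sat_Exs sat_conj_list d)
  also have "\<dots> = (\<exists>ws. length ws = m \<and> set ws \<subseteq> verts G \<and> pw G (2 * r) ws \<and> (\<forall>w\<in>set ws. core_at G \<psi> w \<and> True))" (is "(\<exists> ws. ?P ws) = (\<exists> ws. ?Q ws)")
  proof -
    have "?P ws = ?Q ws" for ws
    proof (cases "length ws = length vs")
      case True
      show ?thesis using far_upd[OF d(1) True] core_upd(1)[OF assms vs_def, of ws] core_upd(2)[OF assms vs_def, where ws=ws and \<nu>=\<nu>] d(2) True by auto
    qed (use d in auto)
    then show ?thesis by simp
  qed
  finally show ?thesis by simp
qed

lemma sat_basic_BAll:
  assumes "fv \<psi> \<subseteq> {x}"
  shows "sat G \<nu> (basic_fm (BAll m r x \<psi>)) =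
    (\<forall>ws. length ws = Suc m \<and> set ws \<subseteq> verts G \<and> pw G (2 * r) ws \<longrightarrow> (\<exists>w\<in>set ws. core_at G \<psi> w))"
proof -
  define vs where "vs = fresh_vars x \<psi> (Suc m)"
  have d: "distinct vs" "length vs = Suc m" using fresh_vars_props vs_def by auto
  have "sat G \<nu> (basic_fm (BAll m r x \<psi>)) = (\<forall>ws. length ws = Suc m \<and> set ws \<subseteq> verts G \<longrightarrow>
     sat G (updl \<nu> vs ws) (far_apart r vs) \<longrightarrow> (\<exists>v\<in>set vs. sat G (updl \<nu> vs ws) (rn x v \<psi>)))"
    by (simp add: vs_def[symmetric] sat_Alls sat_disj_list d)
  also have "\<dots> = (\<forall>ws. length ws = Suc m \<and> set ws \<subseteq> verts G \<longrightarrow> pw G (2 * r) ws \<longrightarrow> (\<exists>w\<in>set ws. core_at G \<psi> w))" (is "(\<forall> ws. ?P ws) = (\<forall> ws. ?Q ws)")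
  proof -
    have "?P ws = ?Q ws" for ws
    proof (cases "length ws = length vs")
      case True
      show ?thesis using far_upd[OF d(1) True] core_upd(1)[OF assms vs_def, of ws] core_upd(2)[OF assms vs_def, where ws=ws and \<nu>=\<nu>] d(2) True by auto
    qed (use d in auto)
    then show ?thesis by simp
  qed
  finally show ?thesis by auto
qed

lemma sat_var_BEx:
  assumes "fv \<psi> \<subseteq> {x}"
  shows "sat G \<nu> (variant C M k (BEx m r x \<psi>)) =
    (\<exists>ws. length ws = k \<and> set ws \<subseteq> verts G \<and> pw G (2 * r) ws \<and> (\<forall>w\<in>set ws. core_at G \<psi> w \<and> w \<in> upred G C))"
proof -
  define vs where "vs = fresh_vars x \<psi> k"
  have d: "distinct vs" "length vs = k" using fresh_vars_props vs_def by auto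
  have "sat G \<nu> (variant C M k (BEx m r x \<psi>)) = (\<exists>ws. length ws = k \<and> set ws \<subseteq> verts G \<and>
     sat G (updl \<nu> vs ws) (far_apart r vs) \<and> (\<forall>v\<in>set vs. sat G (updl \<nu> vs ws) (rn x v \<psi>) \<and> updl \<nu> vs ws v \<in> upred G C))"
    by (auto simp add: vs_def[symmetric] sat_Exs sat_conj_list d)
  also have "\<dots> = (\<exists>ws. length ws = k \<and> set ws \<subseteq> verts G \<and> pw G (2 * r) ws \<and> (\<forall>w\<in>set ws. core_at G \<psi> w \<and> w \<in> upred G C))" (is "(\<exists> ws. ?P ws) = (\<exists> ws. ?Q ws)")
  proof -
    have "?P ws = ?Q ws" for ws
    proof (cases "length ws = length vs")
      case True
      show ?thesis using far_upd[OF d(1) True] core_upd(1)[OF assms vs_def, of ws] core_upd(2)[OF assms vs_def, where ws=ws and \<nu>=\<nu>] d(2) True by auto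
    qed (use d in auto)
    then show ?thesis by simp
  qed
  finally show ?thesis .
qed

lemma sat_var_BAll:
  assumes "fv \<psi> \<subseteq> {x}"
  shows "sat G \<nu> (variant C M k (BAll m r x \<psi>)) =
    (\<forall>ws. length ws = Suc k \<and> set ws \<subseteq> verts G \<and> pw G (2 * r) ws \<and> (\<forall>w\<in>set ws. w \<in> upred G M)
       \<longrightarrow> (\<exists>w\<in>set ws. core_at G \<psi> w))"
proof -
  define vs where "vs = fresh_vars x \<psi> (Suc k)"
  have d: "distinct vs" "length vs = Suc k" using fresh_vars_props vs_def by auto
  have "sat G \<nu> (variant C M k (BAll m r x \<psi>)) = (\<forall>ws. length ws = Suc k \<and> set ws \<subseteq> verts G \<longrightarrow>
     (\<forall>v\<in>set vs. updl \<nu> vs ws v \<in> upred G M) \<and> sat G (updl \<nu> vs ws) (far_apart r vs) \<longrightarrow> (\<exists>v\<in>set vs. sat G (updl \<nu> vs ws) (rn x v \<psi>)))"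
    by (simp add: vs_def[symmetric] sat_Alls sat_disj_list sat_conj_list d)
  also have "\<dots> = (\<forall>ws. length ws = Suc k \<and> set ws \<subseteq> verts G \<and> pw G (2 * r) ws \<and> (\<forall>w\<in>set ws. w \<in> upred G M)
       \<longrightarrow> (\<exists>w\<in>set ws. core_at G \<psi> w))" (is "(\<forall> ws. ?P ws) = (\<forall> ws. ?Q ws)")
  proof -
    have "?P ws = ?Q ws" for ws
    proof (cases "length ws = length vs")
      case True
      show ?thesis using far_upd[OF d(1) True] core_upd(1)[OF assms vs_def, of ws] core_upd(2)[OF assms vs_def, where ws=ws and \<nu>=\<nu>] d(2) True by auto
    qed (use d in auto)
    then show ?thesis by simp
  qed
  finally show ?thesis .
qed


definition symg :: "('v, 'p) interp \<Rightarrow> bool" where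
  "symg G \<longleftrightarrow> (\<forall>u v. adj G u v \<longrightarrow> adj G v u)"

lemma models_const: "(\<And>\<nu>. sat G \<nu> \<phi> = P) \<Longrightarrow> models G \<phi> = P"
  by (simp add: models_def)

lemma list_set_ex':
  assumes "symg G"
  shows "(\<exists>ws. length ws = k \<and> set ws \<subseteq> verts G \<and> pw G d ws \<and> (\<forall>w\<in>set ws. Q w))
     \<longleftrightarrow> (\<exists>W\<subseteq>verts G. finite W \<and> card W = k \<and> farset G d W \<and> (\<forall>w\<in>W. Q w))"
proof -
  have "(length ws = k \<and> set ws \<subseteq> verts G \<and> pw G d ws \<and> (\<forall>w\<in>set ws. Q w)) =
        (length ws = k \<and> set ws \<subseteq> verts G \<and> (\<forall>i j. i < j \<longrightarrow> j < k \<longrightarrow> \<not> dle G d (ws ! i) (ws ! j))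
            \<and> (\<forall>w\<in>set ws. Q w))" for ws
    unfolding pw_def by auto
  then have "(\<exists>ws. length ws = k \<and> set ws \<subseteq> verts G \<and> pw G d ws \<and> (\<forall>w\<in>set ws. Q w)) =
        (\<exists>ws. length ws = k \<and> set ws \<subseteq> verts G \<and> (\<forall>i j. i < j \<longrightarrow> j < k \<longrightarrow> \<not> dle G d (ws ! i) (ws ! j))
            \<and> (\<forall>w\<in>set ws. Q w))" by simp
  also have "\<dots> = (\<exists>W\<subseteq>verts G. finite W \<and> card W = k \<and> farset G d W \<and> (\<forall>w\<in>W. Q w))"
    by (rule list_set_ex[OF assms[unfolded symg_def]])
  finally show ?thesis .
qed

lemma models_BEx_set:
  assumes "fv \<psi> \<subseteq> {x}" "symg G"
  shows "models G (basic_fm (BEx m r x \<psi>)) =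
    (\<exists>W\<subseteq>verts G. finite W \<and> card W = m \<and> farset G (2 * r) W \<and> (\<forall>w\<in>W. core_at G \<psi> w))"
proof (intro models_const)
  fix \<nu>
  have "sat G \<nu> (basic_fm (BEx m r x \<psi>)) =
    (\<exists>ws. length ws = m \<and> set ws \<subseteq> verts G \<and> pw G (2 * r) ws \<and> (\<forall>w\<in>set ws. core_at G \<psi> w))"
    by (rule sat_basic_BEx[OF assms(1)])
  also have "\<dots> = (\<exists>W\<subseteq>verts G. finite W \<and> card W = m \<and> farset G (2 * r) W \<and> (\<forall>w\<in>W. core_at G \<psi> w))"
    by (rule list_set_ex'[OF assms(2)])
  finally show "sat G \<nu> (basic_fm (BEx m r x \<psi>)) = \<dots>" .
qed

lemma models_BAll_set:
  assumes "fv \<psi> \<subseteq> {x}" "symg G"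
  shows "models G (basic_fm (BAll m r x \<psi>)) =
    (\<not> (\<exists>W\<subseteq>verts G. finite W \<and> card W = Suc m \<and> farset G (2 * r) W \<and> (\<forall>w\<in>W. \<not> core_at G \<psi> w)))"
proof (intro models_const)
  fix \<nu>
  have "sat G \<nu> (basic_fm (BAll m r x \<psi>)) =
    (\<not> (\<exists>ws. length ws = Suc m \<and> set ws \<subseteq> verts G \<and> pw G (2 * r) ws \<and> (\<forall>w\<in>set ws. \<not> core_at G \<psi> w)))"
  proof -
    have "sat G \<nu> (basic_fm (BAll m r x \<psi>)) =
      (\<forall>ws. length ws = Suc m \<and> set ws \<subseteq> verts G \<and> pw G (2 * r) ws \<longrightarrow> (\<exists>w\<in>set ws. core_at G \<psi> w))"
      by (rule sat_basic_BAll[OF assms(1)])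
    then show ?thesis by blast
  qed
  also have "\<dots> = (\<not> (\<exists>W\<subseteq>verts G. finite W \<and> card W = Suc m \<and> farset G (2 * r) W \<and> (\<forall>w\<in>W. \<not> core_at G \<psi> w)))"
    by (simp only: list_set_ex'[OF assms(2)])
  finally show "sat G \<nu> (basic_fm (BAll m r x \<psi>)) = \<dots>" .
qed

lemma models_varEx_set:
  assumes "fv \<psi> \<subseteq> {x}" "symg G"
  shows "models G (variant C M k (BEx m r x \<psi>)) =
    (\<exists>W\<subseteq>verts G. finite W \<and> card W = k \<and> farset G (2 * r) W \<and> (\<forall>w\<in>W. core_at G \<psi> w \<and> w \<in> upred G C))"
proof (intro models_const)
  fix \<nu>
  have "sat G \<nu> (variant C M k (BEx m r x \<psi>)) =
    (\<exists>ws. length ws = k \<and> set ws \<subseteq> verts G \<and> pw G (2 * r) ws \<and> (\<forall>w\<in>set ws. core_at G \<psi> w \<and> w \<in> upred G C))"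
    by (rule sat_var_BEx[OF assms(1)])
  also have "\<dots> = (\<exists>W\<subseteq>verts G. finite W \<and> card W = k \<and> farset G (2 * r) W \<and> (\<forall>w\<in>W. core_at G \<psi> w \<and> w \<in> upred G C))"
    by (rule list_set_ex'[OF assms(2)])
  finally show "sat G \<nu> (variant C M k (BEx m r x \<psi>)) = \<dots>" .
qed

lemma models_varAll_set:
  assumes "fv \<psi> \<subseteq> {x}" "symg G"
  shows "models G (variant C M k (BAll m r x \<psi>)) =
    (\<not> (\<exists>W\<subseteq>verts G. finite W \<and> card W = Suc k \<and> farset G (2 * r) W \<and> (\<forall>w\<in>W. w \<in> upred G M \<and> \<not> core_at G \<psi> w)))"
proof (intro models_const)
  fix \<nu>
  have "sat G \<nu> (variant C M k (BAll m r x \<psi>)) =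
    (\<not> (\<exists>ws. length ws = Suc k \<and> set ws \<subseteq> verts G \<and> pw G (2 * r) ws \<and> (\<forall>w\<in>set ws. w \<in> upred G M \<and> \<not> core_at G \<psi> w)))"
  proof -
    have "sat G \<nu> (variant C M k (BAll m r x \<psi>)) =
      (\<forall>ws. length ws = Suc k \<and> set ws \<subseteq> verts G \<and> pw G (2 * r) ws \<and> (\<forall>w\<in>set ws. w \<in> upred G M)
       \<longrightarrow> (\<exists>w\<in>set ws. core_at G \<psi> w))"
      by (rule sat_var_BAll[OF assms(1)])
    then show ?thesis by blast
  qed
  also have "\<dots> = (\<not> (\<exists>W\<subseteq>verts G. finite W \<and> card W = Suc k \<and> farset G (2 * r) W \<and> (\<forall>w\<in>W. w \<in> upred G M \<and> \<not> core_at G \<psi> w)))"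
    by (simp only: list_set_ex'[OF assms(2)])
  finally show "sat G \<nu> (variant C M k (BAll m r x \<psi>)) = \<dots>" .
qed

lemma models_conj_list: "models G (conj_list fs) = (\<forall>f\<in>set fs. models G f)"
  unfolding models_def sat_conj_list by blast

lemma models_bconj: "models G (bconj_fm bs) = (\<forall>b\<in>set bs. models G (basic_fm b))"
  unfolding bconj_fm_def models_conj_list by simp

lemma models_bvariant:
  assumes "length q = length bs"
  shows "models G (bconj_variant C M bs q) = (\<forall>k<length bs. models G (variant C M (q ! k) (bs ! k)))"
proof -
  have "set (map2 (variant C M) q bs) = (\<lambda>k. variant C M (q ! k) (bs ! k)) ` {..<length bs}"
    using assms by (auto simp: set_zip image_iff)
  then show ?thesis unfolding bconj_variant_def models_conj_list by auto
qed

section \<open>Locality\<close>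

lemma local_Ex: "local_fm r x (Ex y \<phi>) \<Longrightarrow> \<exists>\<theta>. \<phi> = Conj (Dist r x y) \<theta> \<and> y \<noteq> x \<and> local_fm r x \<theta>"
  apply (cases \<phi>)
  apply simp_all
  apply (rename_tac f1 f2)
  apply (case_tac f1)
  apply auto
  done

lemma local_All: "local_fm r x (All y \<phi>) \<Longrightarrow> \<exists>\<theta>. \<phi> = Imp (Dist r x y) \<theta> \<and> y \<noteq> x \<and> local_fm r x \<theta>"
  apply (cases \<phi>)
  apply simp_all
  apply (rename_tac f1 f2)
  apply (case_tac f1)
  apply auto
  done

lemma local_sat:
  assumes "local_fm r x \<psi>" "layering G lam"
    and H: "verts H = verts G \<inter> S" "\<forall>u w. adj H u w \<longleftrightarrow> adj G u w \<and> u \<in> S \<and> w \<in> S"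
    and S: "\<forall>w\<in>verts G. \<bar>lam w - lam (\<nu> x)\<bar> \<le> int r \<longrightarrow> w \<in> S"
    and P: "\<forall>P\<in>preds \<psi>. \<forall>w\<in>verts G. \<bar>lam w - lam (\<nu> x)\<bar> \<le> int r \<longrightarrow> (w \<in> upred H P \<longleftrightarrow> w \<in> upred G P)"
    and V: "\<forall>z\<in>fv \<psi>. \<nu> z \<in> verts G \<and> \<bar>lam (\<nu> z) - lam (\<nu> x)\<bar> \<le> int r"
  shows "sat H \<nu> \<psi> = sat G \<nu> \<psi>"
  using assms(1) P V S
proof (induction \<psi> arbitrary: \<nu> rule: measure_induct_rule[where f=size])
  case (less \<psi> \<nu>)
  note IH = less.IH
  have Sx: "\<forall>w\<in>verts G. \<bar>lam w - lam (\<nu> x)\<bar> \<le> int r \<longrightarrow> w \<in> S" using less.prems(4) .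
  show ?case
  proof (cases \<psi>)
    case (Ex y \<phi>)
    then obtain \<theta> where th: "\<phi> = Conj (Dist r x y) \<theta>" "y \<noteq> x" "local_fm r x \<theta>"
      using local_Ex less.prems(1) by blast
    have step: "dle H r (\<nu> x) w \<and> sat H (\<nu>(y := w)) \<theta> \<longleftrightarrow> dle G r (\<nu> x) w \<and> sat G (\<nu>(y := w)) \<theta>"
      for w
    proof (cases "dle G r (\<nu> x) w")
      case True
      have lw: "\<bar>lam w - lam (\<nu> x)\<bar> \<le> int r" using dle_layer[OF assms(2) True] by linarith
      have wv: "w \<in> verts G" using dle_verts[OF True] by blast
      have dH: "dle H r (\<nu> x) w" by (rule dle_sub[OF assms(2) H Sx True])
      have "sat H (\<nu>(y := w)) \<theta> = sat G (\<nu>(y := w)) \<theta>"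
      proof (rule IH)
        show "size \<theta> < size \<psi>" using Ex th by simp
        show "local_fm r x \<theta>" by fact
        show "\<forall>P\<in>preds \<theta>. \<forall>w'\<in>verts G. \<bar>lam w' - lam ((\<nu>(y := w)) x)\<bar> \<le> int r \<longrightarrow> (w' \<in> upred H P \<longleftrightarrow> w' \<in> upred G P)"
          using less.prems(2) Ex th by simp
        show "\<forall>z\<in>fv \<theta>. (\<nu>(y := w)) z \<in> verts G \<and> \<bar>lam ((\<nu>(y := w)) z) - lam ((\<nu>(y := w)) x)\<bar> \<le> int r"
          using less.prems(3) Ex th lw wv by auto
        show "\<forall>w'\<in>verts G. \<bar>lam w' - lam ((\<nu>(y := w)) x)\<bar> \<le> int r \<longrightarrow> w' \<in> S"
          using Sx th by simp
      qed
      then show ?thesis using dH True by simp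
    next
      case False
      have "\<not> dle H r (\<nu> x) w"
        using False dle_mono_graph[of H G] H by blast
      then show ?thesis using False by simp
    qed
    have vH: "dle H r (\<nu> x) w \<Longrightarrow> w \<in> verts G" "dle G r (\<nu> x) w \<Longrightarrow> w \<in> verts H" for w
      using dle_verts H(1) dle_layer[OF assms(2)] Sx apply (metis IntE)
      using dle_verts H(1) dle_layer[OF assms(2)] Sx by (metis IntI abs_minus_commute)
    have "sat H \<nu> \<psi> = (\<exists>w\<in>verts H. dle H r (\<nu> x) w \<and> sat H (\<nu>(y := w)) \<theta>)"
      using Ex th by (simp add: sat_Dist del: sat.simps(6))
    also have "\<dots> = (\<exists>w\<in>verts G. dle G r (\<nu> x) w \<and> sat G (\<nu>(y := w)) \<theta>)"
      using step vH H(1) by blast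
    also have "\<dots> = sat G \<nu> \<psi>"
      using Ex th by (simp add: sat_Dist del: sat.simps(6))
    finally show ?thesis .
  next
    case (All y \<phi>)
    then obtain \<theta> where th: "\<phi> = Imp (Dist r x y) \<theta>" "y \<noteq> x" "local_fm r x \<theta>"
      using local_All less.prems(1) by blast
    have step: "(dle H r (\<nu> x) w \<longrightarrow> sat H (\<nu>(y := w)) \<theta>) \<longleftrightarrow> (dle G r (\<nu> x) w \<longrightarrow> sat G (\<nu>(y := w)) \<theta>)"
      for w
    proof (cases "dle G r (\<nu> x) w")
      case True
      have lw: "\<bar>lam w - lam (\<nu> x)\<bar> \<le> int r" using dle_layer[OF assms(2) True] by linarith
      have wv: "w \<in> verts G" using dle_verts[OF True] by blast
      have dH: "dle H r (\<nu> x) w" by (rule dle_sub[OF assms(2) H Sx True])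
      have "sat H (\<nu>(y := w)) \<theta> = sat G (\<nu>(y := w)) \<theta>"
      proof (rule IH)
        show "size \<theta> < size \<psi>" using All th by simp
        show "local_fm r x \<theta>" by fact
        show "\<forall>P\<in>preds \<theta>. \<forall>w'\<in>verts G. \<bar>lam w' - lam ((\<nu>(y := w)) x)\<bar> \<le> int r \<longrightarrow> (w' \<in> upred H P \<longleftrightarrow> w' \<in> upred G P)"
          using less.prems(2) All th by simp
        show "\<forall>z\<in>fv \<theta>. (\<nu>(y := w)) z \<in> verts G \<and> \<bar>lam ((\<nu>(y := w)) z) - lam ((\<nu>(y := w)) x)\<bar> \<le> int r"
          using less.prems(3) All th lw wv by auto
        show "\<forall>w'\<in>verts G. \<bar>lam w' - lam ((\<nu>(y := w)) x)\<bar> \<le> int r \<longrightarrow> w' \<in> S"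
          using Sx th by simp
      qed
      then show ?thesis using dH True by simp
    next
      case False
      have "\<not> dle H r (\<nu> x) w"
        using False dle_mono_graph[of H G] H by blast
      then show ?thesis using False by simp
    qed
    have vH: "dle H r (\<nu> x) w \<Longrightarrow> w \<in> verts G" "dle G r (\<nu> x) w \<Longrightarrow> w \<in> verts H" for w
      using dle_verts H(1) dle_layer[OF assms(2)] Sx apply (metis IntE)
      using dle_verts H(1) dle_layer[OF assms(2)] Sx by (metis IntI abs_minus_commute)
    have "sat H \<nu> \<psi> = (\<forall>w\<in>verts H. dle H r (\<nu> x) w \<longrightarrow> sat H (\<nu>(y := w)) \<theta>)"
      using All th by (simp add: sat_Dist del: sat.simps(6))
    also have "\<dots> = (\<forall>w\<in>verts G. dle G r (\<nu> x) w \<longrightarrow> sat G (\<nu>(y := w)) \<theta>)"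
      using step vH H(1) by blast
    also have "\<dots> = sat G \<nu> \<psi>"
      using All th by (simp add: sat_Dist del: sat.simps(6))
    finally show ?thesis .
  next
    case (Neg \<phi>)
    then show ?thesis using IH[of \<phi> \<nu>] less.prems by simp
  next
    case (Conj \<phi>1 \<phi>2)
    then show ?thesis using IH[of \<phi>1 \<nu>] IH[of \<phi>2 \<nu>] less.prems by simp
  next
    case (Disj \<phi>1 \<phi>2)
    then show ?thesis using IH[of \<phi>1 \<nu>] IH[of \<phi>2 \<nu>] less.prems by simp
  next
    case (Imp \<phi>1 \<phi>2)
    then show ?thesis using IH[of \<phi>1 \<nu>] IH[of \<phi>2 \<nu>] less.prems by simp
  next
    case (Dist k a b)
    then show ?thesis using less.prems by simp
  next
    case (Edge a b)
    then have "\<nu> a \<in> S" "\<nu> b \<in> S" using less.prems(3) Sx by auto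
    then show ?thesis using Edge H(2) by simp
  next
    case (Pred P a)
    then show ?thesis using less.prems by simp
  qed simp_all
qed


locale cov =
  fixes l :: int and r :: nat
  assumes Npos: "l - 2 * int r > 0"
begin

definition N :: int where "N = l - 2 * int r"

lemma N_pos: "N > 0" using Npos by (simp add: N_def)
lemma l_pos: "l \<ge> 1" using Npos by linarith
lemma l_eq: "l = N + 2 * int r" by (simp add: N_def)

definition blk :: "int \<Rightarrow> int \<Rightarrow> int" where
  "blk n j = j - int r - ((j - int r - n) mod N)"

lemma blk_props:
  "blk n j mod N = n mod N" "blk n j + int r \<le> j" "j \<le> blk n j + int r + N - 1"
proof -
  have m: "0 \<le> (j - int r - n) mod N" "(j - int r - n) mod N < N" using N_pos by auto
  show "blk n j + int r \<le> j" "j \<le> blk n j + int r + N - 1" using m unfolding blk_def by linarith+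
  have "blk n j = n + N * ((j - int r - n) div N)"
    unfolding blk_def using div_mult_mod_eq[of "j - int r - n" N] by (simp add: algebra_simps)
  then show "blk n j mod N = n mod N" by simp
qed

lemma same_res_far:
  assumes "i mod N = i' mod N" "i \<noteq> i'"
  shows "\<bar>i - i'\<bar> \<ge> N"
proof -
  have "N dvd (i - i')" using assms(1) by (simp add: mod_eq_dvd_iff)
  then obtain c where c: "i - i' = N * c" by blast
  have "c \<noteq> 0" using c assms(2) by auto
  then have "\<bar>c\<bar> \<ge> 1" by linarith
  then have "\<bar>N * c\<bar> \<ge> N * 1" using N_pos by (simp add: abs_mult)
  then show ?thesis using c by simp
qed

lemma blk_unique:
  assumes "i mod N = n mod N" "i + int r \<le> j" "j \<le> i + int r + N - 1"
  shows "i = blk n j"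
proof (rule ccontr)
  assume "i \<noteq> blk n j"
  then have "\<bar>i - blk n j\<bar> \<ge> N" using same_res_far assms(1) blk_props(1) by metis
  moreover have "blk n j + int r \<le> j" "j \<le> blk n j + int r + N - 1" using blk_props(2,3)[where n=n and j=j] by auto
  ultimately show False using assms by linarith
qed

lemma ivl_Min: "Min (ivl i l) = i" and ivl_Max: "Max (ivl i l) = i + l - 1"
proof -
  have ne: "ivl i l \<noteq> {}" "finite (ivl i l)" using l_pos by (auto simp: ivl_def)
  show "Min (ivl i l) = i" using l_pos by (intro Min_eqI) (auto simp: ivl_def)
  show "Max (ivl i l) = i + l - 1" using l_pos by (intro Max_eqI) (auto simp: ivl_def)
qed

lemma mid_ivl: "mid d (ivl i l) = {i + int d .. i + l - 1 - int d}"
  by (simp add: mid_def ivl_Min ivl_Max)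

lemma ivl_inj: "ivl i l = ivl i' l \<Longrightarrow> i = i'"
  using ivl_Min by metis

lemma in_cover: "I \<in> cover l r n \<longleftrightarrow> (\<exists>i. I = ivl i l \<and> i mod N = n mod N)"
  by (auto simp: cover_def N_def)

lemma is_cover_iff: "is_cover l r R \<longleftrightarrow> (\<exists>n. R = cover l r n)"
  by (simp add: is_cover_def)

lemma cover_mod: "cover l r n = cover l r (n mod N)"
  by (auto simp: cover_def N_def)

definition blkI :: "int \<Rightarrow> int \<Rightarrow> int set" where
  "blkI n j = ivl (blk n j) l"

lemma blkI_in: "blkI n j \<in> cover l r n"
  unfolding blkI_def in_cover using blk_props(1) by blast

lemma blkI_mid: "j \<in> mid r (blkI n j)"
proof -
  have "blk n j + int r \<le> j" "j \<le> blk n j + l - 1 - int r" using blk_props(2,3)[where n=n and j=j] l_eq by linarith+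
  then show ?thesis unfolding blkI_def mid_ivl by auto
qed

lemma mid_r_ivl: "mid r (ivl i l) = {i + int r .. i + int r + N - 1}"
  by (simp add: mid_ivl N_def algebra_simps)

lemma mid_unique:
  assumes "I \<in> cover l r n" "j \<in> mid r I"
  shows "I = blkI n j"
proof -
  obtain i where i: "I = ivl i l" "i mod N = n mod N" using assms(1) in_cover by blast
  have "i + int r \<le> j" "j \<le> i + int r + N - 1" using assms(2) i(1) mid_r_ivl by auto
  then have "i = blk n j" using blk_unique i(2) by blast
  then show ?thesis using i(1) by (simp add: blkI_def)
qed

lemma mid_subset: "mid d I \<subseteq> mid d' I" if "d' \<le> d"
  using that by (auto simp: mid_def)

lemma mid0: "I = ivl i l \<Longrightarrow> mid 0 I = I"
  using mid_ivl[of 0 i] by (simp add: ivl_def)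

lemma mid_sub_I: "I = ivl i l \<Longrightarrow> mid d I \<subseteq> I"
  using mid_subset[of 0 d I] mid0 by auto

text \<open>Number of intervals of cover n containing layer j.\<close>
definition cnt :: "int \<Rightarrow> int \<Rightarrow> nat" where
  "cnt n j = card {i \<in> {j - l + 1 .. j}. i mod N = n mod N}"

lemma fin_ivl_set: "finite {i \<in> {a .. b::int}. P i}"
  by (rule finite_subset[of _ "{a..b}"]) auto

lemma cover_containing: "{I \<in> cover l r n. j \<in> I} = (\<lambda>i. ivl i l) ` {i \<in> {j - l + 1 .. j}. i mod N = n mod N}"
  by (auto simp: in_cover ivl_def)

lemma card_cover_containing: "card {I \<in> cover l r n. j \<in> I} = cnt n j"
  unfolding cover_containing cnt_def
  by (rule card_image) (meson inj_onI ivl_inj)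

lemma finite_cover_containing: "finite {I \<in> cover l r n. j \<in> I}"
  unfolding cover_containing by (rule finite_imageI) (rule fin_ivl_set)

lemma cnt_pos: "cnt n j \<ge> 1"
proof -
  have "blk n j + int r \<le> j" "j \<le> blk n j + int r + N - 1" "blk n j mod N = n mod N"
    using blk_props[where n=n and j=j] by auto
  then have "blk n j \<in> {i \<in> {j - l + 1 .. j}. i mod N = n mod N}"
    using l_eq by auto
  then have "{i \<in> {j - l + 1 .. j}. i mod N = n mod N} \<noteq> {}" by blast
  then have "card {i \<in> {j - l + 1 .. j}. i mod N = n mod N} \<noteq> 0"
    using fin_ivl_set by (simp add: card_eq_0_iff)
  then show ?thesis unfolding cnt_def by linarith
qed

lemma sum_cnt: "(\<Sum>n\<in>{0..<N}. cnt n j) = nat l"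
proof -
  let ?A = "{j - l + 1 .. j}"
  have part: "?A = (\<Union>n\<in>{0..<N}. {i \<in> ?A. i mod N = n mod N})"
  proof
    show "?A \<subseteq> (\<Union>n\<in>{0..<N}. {i \<in> ?A. i mod N = n mod N})"
    proof
      fix i assume "i \<in> ?A"
      moreover have "i mod N \<in> {0..<N}" using N_pos by auto
      moreover have "i mod N = (i mod N) mod N" by simp
      ultimately show "i \<in> (\<Union>n\<in>{0..<N}. {i \<in> ?A. i mod N = n mod N})" by blast
    qed
  qed auto
  have "card ?A = (\<Sum>n\<in>{0..<N}. card {i \<in> ?A. i mod N = n mod N})"
    apply (subst part)
    apply (rule card_UN_disjoint)
      apply simp
     apply (rule ballI, rule fin_ivl_set)
    apply (auto simp: mod_pos_pos_trivial)
    done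
  moreover have "card ?A = nat l" by simp
  ultimately show ?thesis unfolding cnt_def by simp
qed

lemma finite_cover_meeting:
  assumes "finite V"
  shows "finite {I \<in> cover l r n. \<exists>v\<in>V. lam v \<in> I}"
proof -
  have "{I \<in> cover l r n. \<exists>v\<in>V. lam v \<in> I} = (\<Union>v\<in>V. {I \<in> cover l r n. lam v \<in> I})" by auto
  then show ?thesis using assms finite_cover_containing by simp
qed

end


lemma foldr_max_ge: "x \<in> set xs \<Longrightarrow> f x \<le> foldr max (map f xs) (0::nat)"
  by (induction xs) auto

lemma xpos_conj_list: "xpos X (conj_list fs) = (\<forall>f\<in>set fs. xpos X f)"
  by (induction fs) (auto simp: conj_list_def)
lemma xpos_disj_list: "xpos X (disj_list fs) = (\<forall>f\<in>set fs. xpos X f)"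
  by (induction fs) (auto simp: disj_list_def)
lemma xpos_Exs: "xpos X (Exs vs \<phi>) = xpos X \<phi>"
  by (induction vs) (auto simp: Exs_def)
lemma xpos_Alls: "xpos X (Alls vs \<phi>) = xpos X \<phi>"
  by (induction vs) (auto simp: Alls_def)
lemma preds_conj_list: "preds (conj_list fs) = (\<Union>f\<in>set fs. preds f)"
  by (induction fs) (auto simp: conj_list_def)
lemma preds_disj_list: "preds (disj_list fs) = (\<Union>f\<in>set fs. preds f)"
  by (induction fs) (auto simp: disj_list_def)
lemma preds_Exs: "preds (Exs vs \<phi>) = preds \<phi>"
  by (induction vs) (auto simp: Exs_def)
lemma preds_Alls: "preds (Alls vs \<phi>) = preds \<phi>"
  by (induction vs) (auto simp: Alls_def)

lemma layering_expand: "layering (expand G P A) lam = layering G lam"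
  by (simp add: layering_def)

lemma symg_expand: "symg (expand G P A) = symg G"
  by (simp add: symg_def)

locale setting = cov +
  fixes L :: "'p set" and X C M :: 'p and bs :: "'p basic list"
    and G :: "('v, 'p) interp" and lam :: "'v \<Rightarrow> int"
  assumes wf: "\<forall>b\<in>set bs. wf_basic b"
    and predsL: "preds (bconj_fm bs) \<subseteq> L \<union> {X}"
    and xposb: "X_positive X (bconj_fm bs)"
    and rdef: "r = bconj_range bs"
    and CnL: "C \<notin> L \<union> {X}" and MnL: "M \<notin> L \<union> {X}" and CM: "C \<noteq> M" and XL: "X \<notin> L"
    and LG: "L_interp L G" and lay: "layering G lam"
begin

abbreviation Gs :: "int set \<Rightarrow> ('v, 'p) interp" where
  "Gs I \<equiv> G_sub G lam r C M I"

abbreviation LP :: "int set \<Rightarrow> 'v set" where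
  "LP J \<equiv> layer_pre G lam J"

lemma finG: "finite (verts G)" using LG by (simp add: L_interp_def)

lemma symG: "symg G" using LG by (simp add: L_interp_def symg_def)

lemma LP_sub: "LP J \<subseteq> verts G" by (auto simp: layer_pre_def)

lemma LP_mono: "J \<subseteq> J' \<Longrightarrow> LP J \<subseteq> LP J'" by (auto simp: layer_pre_def)

lemma in_LP: "v \<in> LP J \<longleftrightarrow> v \<in> verts G \<and> lam v \<in> J" by (simp add: layer_pre_def)

lemma verts_Gs: "verts (Gs I) = LP I"
  by (auto simp: G_sub_def restrict_def layer_pre_def)

lemma adj_Gs: "adj (Gs I) u w = (adj G u w \<and> u \<in> LP I \<and> w \<in> LP I)"
  by (simp add: G_sub_def restrict_def)

lemma upred_Gs: "upred (Gs I) P =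
   (if P = M then LP (mid r I) else if P = C then LP (mid (2 * r) I) else upred G P \<inter> LP I)"
  by (simp add: G_sub_def restrict_def)

lemma symGs: "symg (Gs I)"
  using symG by (simp add: symg_def adj_Gs)

lemma dle_Gs_G: "dle (Gs I) k u w \<Longrightarrow> dle G k u w"
  by (rule dle_mono_graph[of "Gs I" G]) (auto simp: verts_Gs adj_Gs LP_sub[THEN subsetD])

lemma dle_G_Gs:
  assumes "dle G k u w" "\<forall>v\<in>verts G. \<bar>lam v - lam u\<bar> \<le> int k \<longrightarrow> lam v \<in> I"
  shows "dle (Gs I) k u w"
  by (rule dle_sub[OF lay _ _ _ assms(1), of _ "LP I"]) (use assms(2) in \<open>auto simp: verts_Gs adj_Gs layer_pre_def\<close>)

lemma range_le: "b \<in> set bs \<Longrightarrow> b_range b \<le> r"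
  using foldr_max_ge[of b bs b_range] rdef by (simp add: bconj_range_def)

lemma spread_le: "b \<in> set bs \<Longrightarrow> b_spread b \<le> bconj_spread bs"
  using foldr_max_ge[of b bs b_spread] by (simp add: bconj_spread_def)

lemma basic_props:
  assumes "b \<in> set bs" "b = BEx m' r' x \<psi> \<or> b = BAll m' r' x \<psi>"
  shows "local_fm r' x \<psi>" "fv \<psi> \<subseteq> {x}" "r' \<le> r"
proof -
  have "wf_basic b" using wf assms(1) by blast
  then show "local_fm r' x \<psi>" "fv \<psi> \<subseteq> {x}" "r' \<le> r"
    using assms(2) range_le[OF assms(1)] by (auto simp: wf_basic_def)
qed

lemma xpos_bs: "b \<in> set bs \<Longrightarrow> xpos X (basic_fm b)"
  using xposb by (simp add: X_positive_def bconj_fm_def xpos_conj_list)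

lemma preds_bs: "b \<in> set bs \<Longrightarrow> preds (basic_fm b) \<subseteq> L \<union> {X}"
  using predsL by (auto simp: bconj_fm_def preds_conj_list)

lemma core_good:
  assumes "b \<in> set bs" "b = BAll m' r' x \<psi> \<or> (b = BEx m' r' x \<psi> \<and> m' \<ge> 1)"
  shows "xpos X \<psi> \<and> preds \<psi> \<subseteq> L \<union> {X}"
proof -
  from assms(2) show ?thesis
  proof
    assume b: "b = BAll m' r' x \<psi>"
    define vs where "vs = fresh_vars x \<psi> (Suc m')"
    have ne: "vs \<noteq> []" using fresh_vars_props(2)[of x \<psi> "Suc m'"] vs_def by auto
    then obtain v where v: "v \<in> set vs" by (cases vs) auto
    have "xpos X (basic_fm b)" "preds (basic_fm b) \<subseteq> L \<union> {X}" using xpos_bs preds_bs assms(1) by auto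
    then show ?thesis using v b ne
      by (auto simp: vs_def[symmetric] Let_def xpos_Alls preds_Alls xpos_disj_list preds_disj_list xpos_rn preds_rn)
  next
    assume b: "b = BEx m' r' x \<psi> \<and> m' \<ge> 1"
    define vs where "vs = fresh_vars x \<psi> m'"
    have ne: "vs \<noteq> []" using fresh_vars_props(2)[of x \<psi> m'] vs_def b by auto
    then obtain v where v: "v \<in> set vs" by (cases vs) auto
    have "xpos X (basic_fm b)" "preds (basic_fm b) \<subseteq> L \<union> {X}" using xpos_bs preds_bs assms(1) by auto
    then show ?thesis using v b ne
      by (auto simp: vs_def[symmetric] Let_def xpos_Exs preds_Exs xpos_conj_list preds_conj_list xpos_rn preds_rn)
  qed
qed

lemma core_loc:
  assumes "local_fm r' x \<psi>" "fv \<psi> \<subseteq> {x}" "preds \<psi> \<subseteq> L \<union> {X}"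
    and "w \<in> verts G" "\<forall>u\<in>verts G. \<bar>lam u - lam w\<bar> \<le> int r' \<longrightarrow> lam u \<in> I"
    and "\<forall>u\<in>verts G. \<bar>lam u - lam w\<bar> \<le> int r' \<longrightarrow> (u \<in> A \<longleftrightarrow> u \<in> A')"
  shows "core_at (expand (Gs I) X A') \<psi> w = core_at (expand G X A) \<psi> w"
  unfolding core_at_def
proof (rule local_sat[OF assms(1), of "expand G X A" lam _ "LP I"])
  show "layering (expand G X A) lam" using lay by (simp add: layering_expand)
  show "verts (expand (Gs I) X A') = verts (expand G X A) \<inter> LP I"
    using LP_sub by (auto simp: verts_Gs)
  show "\<forall>u v. adj (expand (Gs I) X A') u v = (adj (expand G X A) u v \<and> u \<in> LP I \<and> v \<in> LP I)"
    by (simp add: adj_Gs)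
  show "\<forall>u\<in>verts (expand G X A). \<bar>lam u - lam w\<bar> \<le> int r' \<longrightarrow> u \<in> LP I"
    using assms(5) by (simp add: in_LP)
  show "\<forall>P\<in>preds \<psi>. \<forall>u\<in>verts (expand G X A). \<bar>lam u - lam w\<bar> \<le> int r' \<longrightarrow>
          (u \<in> upred (expand (Gs I) X A') P) = (u \<in> upred (expand G X A) P)"
  proof (intro ballI impI)
    fix P u assume P: "P \<in> preds \<psi>" and u: "u \<in> verts (expand G X A)" "\<bar>lam u - lam w\<bar> \<le> int r'"
    show "(u \<in> upred (expand (Gs I) X A') P) = (u \<in> upred (expand G X A) P)"
    proof (cases "P = X")
      case True then show ?thesis using assms(6) u by simp
    next
      case False
      then have "P \<in> L" using P assms(3) by auto
      then have "P \<noteq> M" "P \<noteq> C" using CnL MnL by auto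
      moreover have "u \<in> LP I" using u assms(5) by (simp add: in_LP)
      ultimately show ?thesis using False by (simp add: upred_Gs)
    qed
  qed
  show "\<forall>z\<in>fv \<psi>. w \<in> verts (expand G X A) \<and> \<bar>lam w - lam w\<bar> \<le> int r'"
    using assms(4) by simp
qed

end


context cov
begin

lemma cover_ivl: "I \<in> cover l r n \<Longrightarrow> \<exists>i. I = ivl i l \<and> i mod N = n mod N"
  using in_cover by blast

lemma mid_ball:
  assumes "I \<in> cover l r n" "a \<in> mid d I" "\<bar>c - a\<bar> \<le> int d"
  shows "c \<in> I"
proof -
  obtain i where i: "I = ivl i l" using cover_ivl assms(1) by blast
  have "a \<in> {i + int d .. i + l - 1 - int d}" using assms(2) i mid_ivl by simp
  then show ?thesis using assms(3) i unfolding ivl_def by auto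
qed

lemma mid_disj:
  assumes "I \<in> cover l r n" "J \<in> cover l r n" "a \<in> mid r I" "a \<in> mid r J"
  shows "I = J"
  using mid_unique assms by metis

lemma mid2_sub: "mid (2 * r) I \<subseteq> mid r I"
  by (rule mid_subset) simp

lemma mid2_far:
  assumes "I \<in> cover l r n" "J \<in> cover l r n" "I \<noteq> J" "a \<in> mid (2 * r) I" "b \<in> mid (2 * r) J"
  shows "\<bar>a - b\<bar> > 2 * int r"
proof -
  obtain i where i: "I = ivl i l" "i mod N = n mod N" using cover_ivl assms(1) by blast
  obtain j where j: "J = ivl j l" "j mod N = n mod N" using cover_ivl assms(2) by blast
  have "i \<noteq> j" using i j assms(3) by auto
  then have d: "\<bar>i - j\<bar> \<ge> N" using same_res_far i(2) j(2) by metis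
  have "i + 2 * int r \<le> a" "a \<le> i + l - 1 - 2 * int r" using assms(4) i(1) by (auto simp: mid_ivl)
  moreover have "j + 2 * int r \<le> b" "b \<le> j + l - 1 - 2 * int r" using assms(5) j(1) by (auto simp: mid_ivl)
  ultimately show ?thesis using d l_eq by linarith
qed

end

locale asel_setting = setting +
  fixes Asel and \<epsilon>1 :: real
  assumes spec: "\<forall>a b q. a \<le> b \<longrightarrow> length q = length bs \<longrightarrow>
           (let H = G_sub G lam r C M {a..b}; \<theta> = bconj_variant C M bs q in
             (\<not> models (expand H X (verts H)) \<theta> \<longrightarrow> Asel {a..b} q = None) \<and>
             (models (expand H X (verts H)) \<theta> \<longrightarrow>
                (\<exists>A. Asel {a..b} q = Some A \<and> A \<subseteq> verts H \<and> models (expand H X A) \<theta>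
                     \<and> real (card A) \<le> (1 + \<epsilon>1) * real (gamma H X \<theta>))))"
begin

lemma spec_I:
  assumes "I \<in> cover l r n" "length q = length bs"
  shows "(\<not> models (expand (Gs I) X (verts (Gs I))) (bconj_variant C M bs q) \<longrightarrow> Asel I q = None) \<and>
         (models (expand (Gs I) X (verts (Gs I))) (bconj_variant C M bs q) \<longrightarrow>
            (\<exists>A. Asel I q = Some A \<and> A \<subseteq> verts (Gs I) \<and> models (expand (Gs I) X A) (bconj_variant C M bs q)
                 \<and> real (card A) \<le> (1 + \<epsilon>1) * real (gamma (Gs I) X (bconj_variant C M bs q))))"
proof -
  obtain i where i: "I = ivl i l" using cover_ivl assms(1) by blast
  have "i \<le> i + l - 1" using l_pos by simp
  moreover have "I = {i .. i + l - 1}" using i by (simp add: ivl_def)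
  ultimately show ?thesis using spec assms(2) unfolding Let_def by metis
qed

lemma spec_some:
  assumes "I \<in> cover l r n" "length q = length bs" "Asel I q \<noteq> None"
  shows "the (Asel I q) \<subseteq> verts (Gs I)" "models (expand (Gs I) X (the (Asel I q))) (bconj_variant C M bs q)"
    "real (card (the (Asel I q))) \<le> (1 + \<epsilon>1) * real (gamma (Gs I) X (bconj_variant C M bs q))"
  using spec_I[OF assms(1,2)] assms(3) by auto

lemma core_mono:
  assumes "xpos X \<psi>" "A \<subseteq> B" "core_at (expand H X A) \<psi> w"
  shows "core_at (expand H X B) \<psi> w"
  using sat_mono[OF assms(1,2)] assms(3) unfolding core_at_def by blast

lemma farset_expand: "farset (expand H P A) d W = farset H d W"
  by (simp add: farset_def)

lemma farset_Gs_G: "farset G d W \<Longrightarrow> farset (Gs I) d W"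
  unfolding farset_def using dle_Gs_G by blast

lemma sound_Ex:
  assumes b: "BEx m' r' x \<psi> \<in> set bs" and R: "R = cover l r n" and pl: "plan R m' p"
    and AI: "\<forall>I\<in>R. AI I \<subseteq> A \<and> models (expand (Gs I) X (AI I)) (variant C M (p I) (BEx m' r' x \<psi>))"
  shows "models (expand G X A) (basic_fm (BEx m' r' x \<psi>))"
proof -
  have bp: "local_fm r' x \<psi>" "fv \<psi> \<subseteq> {x}" "r' \<le> r" using basic_props[OF b] by blast+
  have sym: "symg (expand G X A)" using symG by (simp add: symg_expand)
  show ?thesis
  proof (cases "m' = 0")
    case True
    then show ?thesis using models_BEx_set[OF bp(2) sym] by (intro iffD2[OF models_BEx_set[OF bp(2) sym]])
      (auto simp: farset_def intro!: exI[of _ "{}"])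
  next
    case False
    have good: "xpos X \<psi>" "preds \<psi> \<subseteq> L \<union> {X}" using core_good[OF b] False by auto
    have "\<forall>I\<in>R. \<exists>W. W \<subseteq> verts (Gs I) \<and> finite W \<and> card W = p I \<and> farset (Gs I) (2 * r') W
           \<and> (\<forall>w\<in>W. core_at (expand (Gs I) X (AI I)) \<psi> w \<and> w \<in> LP (mid (2 * r) I))"
    proof
      fix I assume I: "I \<in> R"
      have mI: "models (expand (Gs I) X (AI I)) (variant C M (p I) (BEx m' r' x \<psi>))" using AI I by blast
      have sy: "symg (expand (Gs I) X (AI I))" using symGs by (simp add: symg_expand)
      have "\<exists>W\<subseteq>verts (expand (Gs I) X (AI I)). finite W \<and> card W = p I \<and> farset (expand (Gs I) X (AI I)) (2 * r') W
           \<and> (\<forall>w\<in>W. core_at (expand (Gs I) X (AI I)) \<psi> w \<and> w \<in> upred (expand (Gs I) X (AI I)) C)"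
        using iffD1[OF models_varEx_set[OF bp(2) sy] mI] .
      moreover have "upred (expand (Gs I) X (AI I)) C = LP (mid (2 * r) I)"
        using CnL CM by (simp add: upred_Gs)
      ultimately show "\<exists>W. W \<subseteq> verts (Gs I) \<and> finite W \<and> card W = p I \<and> farset (Gs I) (2 * r') W
           \<and> (\<forall>w\<in>W. core_at (expand (Gs I) X (AI I)) \<psi> w \<and> w \<in> LP (mid (2 * r) I))"
        by (auto simp: farset_expand)
    qed
    then obtain Wf where Wf: "\<And>I. I \<in> R \<Longrightarrow> Wf I \<subseteq> verts (Gs I) \<and> finite (Wf I) \<and> card (Wf I) = p I
           \<and> farset (Gs I) (2 * r') (Wf I)
           \<and> (\<forall>w\<in>Wf I. core_at (expand (Gs I) X (AI I)) \<psi> w \<and> w \<in> LP (mid (2 * r) I))"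
      by metis
    define Sp where "Sp = {I \<in> R. p I \<noteq> 0}"
    have Sp: "finite Sp" "(\<Sum>I\<in>Sp. p I) = m'" "Sp \<subseteq> R" using pl by (auto simp: plan_def Sp_def)
    define WW where "WW = (\<Union>I\<in>Sp. Wf I)"
    have inI: "w \<in> Wf I \<Longrightarrow> I \<in> R \<Longrightarrow> w \<in> verts G \<and> lam w \<in> mid (2 * r) I" for w I
      using Wf by (auto simp: in_LP)
    have disj: "I \<in> Sp \<Longrightarrow> J \<in> Sp \<Longrightarrow> I \<noteq> J \<Longrightarrow> Wf I \<inter> Wf J = {}" for I J
    proof -
      assume IJ: "I \<in> Sp" "J \<in> Sp" "I \<noteq> J"
      show "Wf I \<inter> Wf J = {}"
      proof (rule ccontr)
        assume "Wf I \<inter> Wf J \<noteq> {}"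
        then obtain w where "w \<in> Wf I" "w \<in> Wf J" by blast
        then have "lam w \<in> mid r I" "lam w \<in> mid r J" using inI IJ Sp(3) mid2_sub by blast+
        then show False using mid_disj IJ Sp(3) R by blast
      qed
    qed
    have cardW: "card WW = m'"
    proof -
      have "card WW = (\<Sum>I\<in>Sp. card (Wf I))"
        unfolding WW_def by (rule card_UN_disjoint) (use Sp Wf disj in auto)
      also have "\<dots> = (\<Sum>I\<in>Sp. p I)" using Wf Sp(3) by (intro sum.cong) auto
      finally show ?thesis using Sp(2) by simp
    qed
    have finW: "finite WW" unfolding WW_def using Sp Wf by auto
    have subW: "WW \<subseteq> verts G" unfolding WW_def using Wf Sp(3) verts_Gs LP_sub by blast
    have farW: "farset G (2 * r') WW"
      unfolding farset_def
    proof (intro ballI impI notI)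
      fix u w assume u: "u \<in> WW" and w: "w \<in> WW" and ne: "u \<noteq> w" and d: "dle G (2 * r') u w"
      obtain I where I: "I \<in> Sp" "u \<in> Wf I" using u WW_def by blast
      obtain J where J: "J \<in> Sp" "w \<in> Wf J" using w WW_def by blast
      show False
      proof (cases "I = J")
        case True
        have "\<forall>v\<in>verts G. \<bar>lam v - lam u\<bar> \<le> int (2 * r') \<longrightarrow> lam v \<in> I"
          using mid_ball[of I n "lam u" "2 * r"] inI I Sp(3) R bp(3) by force
        then have "dle (Gs I) (2 * r') u w" using dle_G_Gs d by blast
        then show False using Wf[of I] I J True ne Sp(3) unfolding farset_def by blast
      next
        case False
        have "\<bar>lam u - lam w\<bar> > 2 * int r"
          using mid2_far[of I n J "lam u" "lam w"] inI I J Sp(3) R False by blast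
        moreover have "\<bar>lam u - lam w\<bar> \<le> int (2 * r')" using dle_layer[OF lay d] .
        ultimately show False using bp(3) by linarith
      qed
    qed
    have coreW: "\<forall>w\<in>WW. core_at (expand G X A) \<psi> w"
    proof
      fix w assume "w \<in> WW"
      then obtain I where I: "I \<in> Sp" "w \<in> Wf I" using WW_def by blast
      have IR: "I \<in> R" using I Sp(3) by blast
      have c1: "core_at (expand (Gs I) X (AI I)) \<psi> w" using Wf[OF IR] I by blast
      have wv: "w \<in> verts G" "lam w \<in> mid (2 * r) I" using inI I IR by auto
      have "\<forall>u\<in>verts G. \<bar>lam u - lam w\<bar> \<le> int r' \<longrightarrow> lam u \<in> I"
        using mid_ball[of I n "lam w" "2 * r"] wv IR R bp(3) by force
      then have c2: "core_at (expand G X (AI I)) \<psi> w"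
        using core_loc[OF bp(1,2) good(2) wv(1), of I "AI I" "AI I"] c1 by simp
      have sub: "AI I \<subseteq> A" using AI IR by blast
      show "core_at (expand G X A) \<psi> w" by (rule core_mono[OF good(1) sub c2])
    qed
    show ?thesis
      using models_BEx_set[OF bp(2) sym] subW finW cardW farW coreW by (simp add: farset_expand) blast
  qed
qed

lemma sound_All:
  assumes b: "BAll m' r' x \<psi> \<in> set bs" and R: "R = cover l r n" and pl: "plan R m' p"
    and AI: "\<forall>I\<in>R. AI I \<subseteq> A \<and> models (expand (Gs I) X (AI I)) (variant C M (p I) (BAll m' r' x \<psi>))"
  shows "models (expand G X A) (basic_fm (BAll m' r' x \<psi>))"
proof -
  have bp: "local_fm r' x \<psi>" "fv \<psi> \<subseteq> {x}" "r' \<le> r" using basic_props[OF b] by blast+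
  have sym: "symg (expand G X A)" using symG by (simp add: symg_expand)
  have good: "xpos X \<psi>" "preds \<psi> \<subseteq> L \<union> {X}" using core_good[OF b] by auto
  define Sp where "Sp = {I \<in> R. p I \<noteq> 0}"
  have Sp: "finite Sp" "(\<Sum>I\<in>Sp. p I) = m'" "Sp \<subseteq> R" using pl by (auto simp: plan_def Sp_def)
  show ?thesis
  proof (rule iffD2[OF models_BAll_set[OF bp(2) sym]], rule notI)
    assume "\<exists>W\<subseteq>verts (expand G X A). finite W \<and> card W = Suc m' \<and> farset (expand G X A) (2 * r') W
       \<and> (\<forall>w\<in>W. \<not> core_at (expand G X A) \<psi> w)"
    then obtain W where W: "W \<subseteq> verts G" "finite W" "card W = Suc m'" "farset G (2 * r') W"
      "\<forall>w\<in>W. \<not> core_at (expand G X A) \<psi> w" by (auto simp: farset_expand)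
    define WI where "WI I = W \<inter> LP (mid r I)" for I
    have "\<exists>I\<in>R. card (WI I) > p I"
    proof (rule ccontr)
      assume "\<not> (\<exists>I\<in>R. card (WI I) > p I)"
      then have le: "\<forall>I\<in>R. card (WI I) \<le> p I" by auto
      define T where "T = (\<lambda>w. blkI n (lam w)) ` W"
      have finT: "finite T" unfolding T_def using W(2) by simp
      have TR: "T \<subseteq> R" unfolding T_def R using blkI_in by blast
      have WU: "W = (\<Union>I\<in>T. WI I)"
      proof
        show "W \<subseteq> (\<Union>I\<in>T. WI I)"
        proof
          fix w assume w: "w \<in> W"
          have "w \<in> WI (blkI n (lam w))" unfolding WI_def using w W(1) blkI_mid by (auto simp: in_LP)
          then show "w \<in> (\<Union>I\<in>T. WI I)" using w T_def by blast
        qed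
      qed (auto simp: WI_def)
      have "card W = (\<Sum>I\<in>T. card (WI I))"
      proof -
        have "card (\<Union>I\<in>T. WI I) = (\<Sum>I\<in>T. card (WI I))"
        proof (rule card_UN_disjoint[OF finT])
          show "\<forall>I\<in>T. finite (WI I)" using W(2) by (auto simp: WI_def)
          show "\<forall>I\<in>T. \<forall>J\<in>T. I \<noteq> J \<longrightarrow> WI I \<inter> WI J = {}"
          proof (intro ballI impI)
            fix I J assume IJ: "I \<in> T" "J \<in> T" "I \<noteq> J"
            show "WI I \<inter> WI J = {}"
            proof (rule ccontr)
              assume "WI I \<inter> WI J \<noteq> {}"
              then obtain w where "w \<in> WI I" "w \<in> WI J" by blast
              then have "lam w \<in> mid r I" "lam w \<in> mid r J" by (auto simp: WI_def in_LP)
              then show False using mid_disj[of I n J "lam w"] IJ TR R by blast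
            qed
          qed
        qed
        then show ?thesis using WU by simp
      qed
      also have "\<dots> \<le> (\<Sum>I\<in>T. p I)" using le TR by (intro sum_mono) auto
      also have "\<dots> = (\<Sum>I\<in>T \<inter> Sp. p I)"
        by (rule sum.mono_neutral_right) (use finT Sp_def TR in auto)
      also have "\<dots> \<le> (\<Sum>I\<in>Sp. p I)" by (rule sum_mono2) (use Sp in auto)
      finally show False using W(3) Sp(2) by simp
    qed
    then obtain I where I: "I \<in> R" "card (WI I) \<ge> Suc (p I)" by auto
    obtain W' where W': "W' \<subseteq> WI I" "card W' = Suc (p I)"
      using obtain_subset_with_card_n[OF I(2)] by blast
    have finW': "finite W'" using W' W(2) finite_subset[of W' W] by (auto simp: WI_def)
    have W'v: "W' \<subseteq> verts (Gs I)"
    proof -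
      obtain i where "I = ivl i l" using cover_ivl I(1) R by blast
      then have "mid r I \<subseteq> I" by (rule mid_sub_I)
      then have "LP (mid r I) \<subseteq> LP I" by (rule LP_mono)
      then show ?thesis using W' by (auto simp: WI_def verts_Gs)
    qed
    have W'far: "farset (Gs I) (2 * r') W'"
      using farset_Gs_G[of "2 * r'" W' I] W(4) W' unfolding WI_def farset_def by blast
    have sy: "symg (expand (Gs I) X (AI I))" using symGs by (simp add: symg_expand)
    have mI: "models (expand (Gs I) X (AI I)) (variant C M (p I) (BAll m' r' x \<psi>))" using AI I(1) by blast
    have sub: "AI I \<subseteq> A" using AI I(1) by blast
    have bad: "\<forall>w\<in>W'. w \<in> upred (expand (Gs I) X (AI I)) M \<and> \<not> core_at (expand (Gs I) X (AI I)) \<psi> w"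
    proof
      fix w assume w: "w \<in> W'"
      have wv: "w \<in> verts G" "lam w \<in> mid r I" "w \<in> W" using w W' by (auto simp: WI_def in_LP)
      have "upred (expand (Gs I) X (AI I)) M = LP (mid r I)" using MnL by (simp add: upred_Gs)
      then have m: "w \<in> upred (expand (Gs I) X (AI I)) M" using w W' by (auto simp: WI_def)
      have "\<forall>u\<in>verts G. \<bar>lam u - lam w\<bar> \<le> int r' \<longrightarrow> lam u \<in> I"
        using mid_ball[of I n "lam w" r] wv I(1) R bp(3) by force
      then have e: "core_at (expand (Gs I) X (AI I)) \<psi> w = core_at (expand G X (AI I)) \<psi> w"
        using core_loc[OF bp(1,2) good(2) wv(1), of I "AI I" "AI I"] by simp
      have "\<not> core_at (expand G X (AI I)) \<psi> w"
        using core_mono[OF good(1) sub] W(5) wv(3) by blast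
      then show "w \<in> upred (expand (Gs I) X (AI I)) M \<and> \<not> core_at (expand (Gs I) X (AI I)) \<psi> w"
        using m e by simp
    qed
    have "\<exists>W\<subseteq>verts (expand (Gs I) X (AI I)). finite W \<and> card W = Suc (p I) \<and> farset (expand (Gs I) X (AI I)) (2 * r') W
       \<and> (\<forall>w\<in>W. w \<in> upred (expand (Gs I) X (AI I)) M \<and> \<not> core_at (expand (Gs I) X (AI I)) \<psi> w)"
      using W'v finW' W'(2) W'far bad by (auto simp: farset_expand)
    then show False using iffD1[OF models_varAll_set[OF bp(2) sy] mI] by blast
  qed
qed

lemma sound:
  assumes "(R, ps) \<in> admissible Asel l r bs"
  shows "models (expand G X (A_Rp Asel R ps)) (bconj_fm bs)" "A_Rp Asel R ps \<subseteq> verts G"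
proof -
  obtain n where R: "R = cover l r n" using assms by (auto simp: admissible_def is_cover_def)
  have len: "length ps = length bs" and pl: "\<forall>k<length bs. plan R (b_spread (bs ! k)) (ps ! k)"
    and def: "\<forall>I\<in>R. Asel I (map (\<lambda>f. f I) ps) \<noteq> None" using assms by (auto simp: admissible_def)
  define A where "A = A_Rp Asel R ps"
  define AI where "AI I = the (Asel I (map (\<lambda>f. f I) ps))" for I
  have AIA: "I \<in> R \<Longrightarrow> AI I \<subseteq> A" for I unfolding A_def A_Rp_def AI_def by blast
  have AIv: "I \<in> R \<Longrightarrow> AI I \<subseteq> verts (Gs I)" for I
    using spec_some(1)[of I n "map (\<lambda>f. f I) ps"] def R len unfolding AI_def by simp
  have AIm: "I \<in> R \<Longrightarrow> models (expand (Gs I) X (AI I)) (bconj_variant C M bs (map (\<lambda>f. f I) ps))" for I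
    using spec_some(2)[of I n "map (\<lambda>f. f I) ps"] def R len unfolding AI_def by simp
  show "A_Rp Asel R ps \<subseteq> verts G"
    using AIv LP_sub unfolding A_Rp_def AI_def verts_Gs by blast
  have "\<forall>k<length bs. models (expand G X A) (basic_fm (bs ! k))"
  proof (intro allI impI)
    fix k assume k: "k < length bs"
    have var: "\<forall>I\<in>R. AI I \<subseteq> A \<and> models (expand (Gs I) X (AI I)) (variant C M ((ps ! k) I) (bs ! k))"
    proof
      fix I assume I: "I \<in> R"
      have "\<forall>k<length bs. models (expand (Gs I) X (AI I)) (variant C M (map (\<lambda>f. f I) ps ! k) (bs ! k))"
        using iffD1[OF models_bvariant[of "map (\<lambda>f. f I) ps" bs] AIm[OF I]] len by simp
      then have "models (expand (Gs I) X (AI I)) (variant C M (map (\<lambda>f. f I) ps ! k) (bs ! k))"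
        using k by blast
      then show "AI I \<subseteq> A \<and> models (expand (Gs I) X (AI I)) (variant C M ((ps ! k) I) (bs ! k))"
        using AIA[OF I] k len by simp
    qed
    have inb: "bs ! k \<in> set bs" using k by simp
    show "models (expand G X A) (basic_fm (bs ! k))"
    proof (cases "bs ! k")
      case (BEx m' r' x \<psi>)
      have plk: "plan R m' (ps ! k)" using pl k BEx by (metis b_spread.simps(1))
      have "models (expand G X A) (basic_fm (BEx m' r' x \<psi>))"
        by (rule sound_Ex[OF _ R plk, where AI=AI]) (use inb var BEx in auto)
      then show ?thesis using BEx by simp
    next
      case (BAll m' r' x \<psi>)
      have plk: "plan R m' (ps ! k)" using pl k BAll by (metis b_spread.simps(2))
      have "models (expand G X A) (basic_fm (BAll m' r' x \<psi>))"
        by (rule sound_All[OF _ R plk, where AI=AI]) (use inb var BAll in auto)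
      then show ?thesis using BAll by simp
    qed
  qed
  then show "models (expand G X (A_Rp Asel R ps)) (bconj_fm bs)"
    unfolding models_bconj A_def by (metis in_set_conv_nth)
qed

end


context cov
begin

definition pos :: "int \<Rightarrow> int \<Rightarrow> int" where
  "pos n j = (j - int r - n) mod N"

definition goodp :: "int \<Rightarrow> int \<Rightarrow> bool" where
  "goodp n j \<longleftrightarrow> 3 * int r \<le> pos n j \<and> pos n j \<le> N - 1 - 3 * int r"

lemma blk_pos: "blk n j = j - int r - pos n j"
  by (simp add: blk_def pos_def)

lemma good_ball:
  assumes "goodp n j" "\<bar>c - j\<bar> \<le> 2 * int r"
  shows "c \<in> mid (2 * r) (blkI n j)"
  using assms l_eq unfolding blkI_def mid_ivl goodp_def blk_pos by auto

lemma bad_count: "card {n \<in> {0..<N}. \<not> goodp n j} \<le> 6 * r"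
proof -
  let ?f = "\<lambda>n. pos n j"
  have inj: "inj_on ?f {n \<in> {0..<N}. \<not> goodp n j}"
  proof (rule inj_onI)
    fix a b assume a: "a \<in> {n \<in> {0..<N}. \<not> goodp n j}" and b: "b \<in> {n \<in> {0..<N}. \<not> goodp n j}"
      and e: "pos a j = pos b j"
    have "N dvd ((j - int r - a) - (j - int r - b))" using e unfolding pos_def by (simp add: mod_eq_dvd_iff)
    then have "N dvd (b - a)" by simp
    then have "b mod N = a mod N" by (simp add: mod_eq_dvd_iff)
    then show "a = b" using a b by (simp add: mod_pos_pos_trivial)
  qed
  have img: "?f ` {n \<in> {0..<N}. \<not> goodp n j} \<subseteq> {0..<3 * int r} \<union> {N - 3 * int r..<N}"
  proof
    fix u assume "u \<in> ?f ` {n \<in> {0..<N}. \<not> goodp n j}"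
    then obtain n where n: "\<not> goodp n j" "u = pos n j" by auto
    have "0 \<le> u" "u < N" using n(2) N_pos unfolding pos_def by auto
    then show "u \<in> {0..<3 * int r} \<union> {N - 3 * int r..<N}" using n unfolding goodp_def by auto
  qed
  have "card {n \<in> {0..<N}. \<not> goodp n j} \<le> card ({0..<3 * int r} \<union> {N - 3 * int r..<N})"
    by (rule card_inj_on_le[OF inj img]) simp
  also have "\<dots> \<le> card {0..<3 * int r} + card {N - 3 * int r..<N}" by (rule card_Un_le)
  also have "\<dots> = 6 * r" by simp
  finally show ?thesis .
qed

end


lemma farset_subset: "farset G d W \<Longrightarrow> W' \<subseteq> W \<Longrightarrow> farset G d W'"
  unfolding farset_def by blast

context asel_setting
begin

definition cen_prop :: "'b set \<Rightarrow> 'a basic \<Rightarrow> 'b set \<Rightarrow> bool" where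
  "cen_prop D b S \<longleftrightarrow> S \<subseteq> verts G \<and> finite S \<and> card S \<le> b_spread b \<and> farset G (2 * b_range b) S
     \<and> (\<forall>m' r' x \<psi>. b = BEx m' r' x \<psi> \<longrightarrow> card S = m' \<and> (\<forall>w\<in>S. core_at (expand G X D) \<psi> w))
     \<and> (\<forall>m' r' x \<psi>. b = BAll m' r' x \<psi> \<longrightarrow> (\<forall>w\<in>S. \<not> core_at (expand G X D) \<psi> w)
          \<and> (\<forall>W\<subseteq>verts G. farset G (2 * r') W \<and> (\<forall>w\<in>W. \<not> core_at (expand G X D) \<psi> w) \<longrightarrow> card W \<le> card S))"

lemma cen_exists:
  assumes "b \<in> set bs" "models (expand G X D) (basic_fm b)"
  shows "\<exists>S. cen_prop D b S"
proof (cases b)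
  case (BEx m' r' x \<psi>)
  have bp: "fv \<psi> \<subseteq> {x}" using basic_props[OF assms(1)] BEx by blast
  have sym: "symg (expand G X D)" using symG by (simp add: symg_expand)
  have mb: "models (expand G X D) (basic_fm (BEx m' r' x \<psi>))" using assms(2) unfolding BEx .
  obtain W where W: "W \<subseteq> verts G" "finite W" "card W = m'" "farset G (2 * r') W"
    "\<forall>w\<in>W. core_at (expand G X D) \<psi> w"
    using iffD1[OF models_BEx_set[OF bp sym] mb] by (auto simp: farset_expand)
  show ?thesis using W BEx by (intro exI[of _ W]) (auto simp: cen_prop_def)
next
  case (BAll m' r' x \<psi>)
  have bp: "fv \<psi> \<subseteq> {x}" using basic_props[OF assms(1)] BAll by blast
  have sym: "symg (expand G X D)" using symG by (simp add: symg_expand)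
  define F where "F = {W. W \<subseteq> verts G \<and> farset G (2 * r') W \<and> (\<forall>w\<in>W. \<not> core_at (expand G X D) \<psi> w)}"
  have finF: "finite F"
  proof (rule finite_subset[of F "Pow (verts G)"])
    show "F \<subseteq> Pow (verts G)" unfolding F_def by auto
    show "finite (Pow (verts G))" using finG by simp
  qed
  have neF: "{} \<in> F" unfolding F_def farset_def by auto
  have "Max (card ` F) \<in> card ` F" using Max_in[of "card ` F"] finF neF by blast
  then obtain S where S: "S \<in> F" "card S = Max (card ` F)" by (metis imageE)
  have maxS: "W \<in> F \<Longrightarrow> card W \<le> card S" for W using S(2) finF by simp
  have finS: "finite S" using S(1) finG finite_subset unfolding F_def by blast
  have "card S \<le> m'"
  proof (rule ccontr)
    assume "\<not> card S \<le> m'"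
    then have "Suc m' \<le> card S" by simp
    then obtain S' where S': "S' \<subseteq> S" "card S' = Suc m'" using obtain_subset_with_card_n by metis
    have "\<exists>W\<subseteq>verts (expand G X D). finite W \<and> card W = Suc m' \<and> farset (expand G X D) (2 * r') W
        \<and> (\<forall>w\<in>W. \<not> core_at (expand G X D) \<psi> w)"
      using S(1) S' finS farset_subset[of G "2 * r'" S S'] finite_subset[of S' S]
      unfolding F_def by (intro exI[of _ S']) (auto simp: farset_expand)
    moreover have mb: "models (expand G X D) (basic_fm (BAll m' r' x \<psi>))" using assms(2) unfolding BAll .
    ultimately show False using iffD1[OF models_BAll_set[OF bp sym] mb] by blast
  qed
  then show ?thesis using S(1) finS maxS BAll unfolding F_def
    by (intro exI[of _ S]) (auto simp: cen_prop_def)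
qed

lemma centers:
  assumes "models (expand G X D) (bconj_fm bs)"
  shows "\<exists>Cen. \<forall>k<length bs. cen_prop D (bs ! k) (Cen k)"
proof -
  have "\<forall>k. \<exists>S. k < length bs \<longrightarrow> cen_prop D (bs ! k) S"
    using cen_exists assms unfolding models_bconj by (metis nth_mem)
  then show ?thesis by metis
qed

end


locale good_setting = asel_setting +
  fixes D :: "'b set" and Cen :: "nat \<Rightarrow> 'b set" and n :: int
  assumes Dsub: "D \<subseteq> verts G"
    and cen: "\<forall>k<length bs. cen_prop D (bs ! k) (Cen k)"
    and good: "\<forall>k<length bs. \<forall>c\<in>Cen k. goodp n (lam c)"
begin

definition I0 :: "int set" where "I0 = ivl n l"

definition pk :: "nat \<Rightarrow> int set \<Rightarrow> nat" where
  "pk k I = card (Cen k \<inter> LP (mid r I)) + (if I = I0 then b_spread (bs ! k) - card (Cen k) else 0)"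

lemma cenk: "k < length bs \<Longrightarrow> cen_prop D (bs ! k) (Cen k)" using cen by blast

lemma Dloc:
  assumes "I \<in> cover l r n" "w \<in> verts G" "lam w \<in> mid d I" "r' \<le> d"
  shows "\<forall>u\<in>verts G. \<bar>lam u - lam w\<bar> \<le> int r' \<longrightarrow> lam u \<in> I"
    and "\<forall>u\<in>verts G. \<bar>lam u - lam w\<bar> \<le> int r' \<longrightarrow> (u \<in> D \<longleftrightarrow> u \<in> D \<inter> LP I)"
proof -
  show *: "\<forall>u\<in>verts G. \<bar>lam u - lam w\<bar> \<le> int r' \<longrightarrow> lam u \<in> I"
    using mid_ball[OF assms(1,3)] assms(4) by force
  show "\<forall>u\<in>verts G. \<bar>lam u - lam w\<bar> \<le> int r' \<longrightarrow> (u \<in> D \<longleftrightarrow> u \<in> D \<inter> LP I)"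
    using * by (auto simp: in_LP)
qed

lemma var_Ex:
  assumes k: "k < length bs" and b: "bs ! k = BEx m' r' x \<psi>" and I: "I \<in> cover l r n"
    and A: "D \<inter> LP I \<subseteq> A"
  shows "models (expand (Gs I) X A) (variant C M (pk k I) (bs ! k))"
proof -
  have inb: "BEx m' r' x \<psi> \<in> set bs" using k b nth_mem by metis
  have bp: "local_fm r' x \<psi>" "fv \<psi> \<subseteq> {x}" "r' \<le> r" using basic_props[OF inb] by blast+
  have cp: "Cen k \<subseteq> verts G" "finite (Cen k)" "farset G (2 * r') (Cen k)" "card (Cen k) = m'"
    "\<forall>w\<in>Cen k. core_at (expand G X D) \<psi> w"
    using cenk[OF k] b unfolding cen_prop_def by auto
  define W' where "W' = Cen k \<inter> LP (mid r I)"
  have pkI: "pk k I = card W'" unfolding pk_def W'_def using cp(4) b by simp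
  have sy: "symg (expand (Gs I) X A)" using symGs by (simp add: symg_expand)
  have upC: "upred (expand (Gs I) X A) C = LP (mid (2 * r) I)" using CnL CM by (simp add: upred_Gs)
  have W'v: "W' \<subseteq> verts (Gs I)"
  proof -
    obtain i where "I = ivl i l" using cover_ivl I by blast
    then have "LP (mid r I) \<subseteq> LP I" by (intro LP_mono mid_sub_I)
    then show ?thesis unfolding W'_def verts_Gs by blast
  qed
  have props: "\<forall>w\<in>W'. core_at (expand (Gs I) X A) \<psi> w \<and> w \<in> upred (expand (Gs I) X A) C"
  proof
    fix w assume w: "w \<in> W'"
    have wv: "w \<in> verts G" "lam w \<in> mid r I" "w \<in> Cen k" using w unfolding W'_def by (auto simp: in_LP)
    have gw: "goodp n (lam w)" using good k wv(3) by blast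
    have "lam w \<in> mid (2 * r) (blkI n (lam w))" using good_ball[OF gw] by simp
    moreover have "blkI n (lam w) = I" using mid_unique[OF I wv(2)] by simp
    ultimately have m2: "lam w \<in> mid (2 * r) I" by simp
    have c: "core_at (expand G X D) \<psi> w" using cp(5) wv(3) by blast
    have "m' \<noteq> 0" using cp(4) cp(2) wv(3) card_gt_0_iff by force
    then have gd: "xpos X \<psi>" "preds \<psi> \<subseteq> L \<union> {X}" using core_good[OF inb] by auto
    have "core_at (expand (Gs I) X (D \<inter> LP I)) \<psi> w"
      using core_loc[OF bp(1,2) gd(2) wv(1) Dloc[OF I wv(1) m2, of r']] bp(3) c by simp
    then have "core_at (expand (Gs I) X A) \<psi> w" using core_mono[OF gd(1) A] by blast
    then show "core_at (expand (Gs I) X A) \<psi> w \<and> w \<in> upred (expand (Gs I) X A) C"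
      using m2 wv(1) upC by (simp add: in_LP)
  qed
  have "\<exists>W\<subseteq>verts (expand (Gs I) X A). finite W \<and> card W = pk k I \<and> farset (expand (Gs I) X A) (2 * r') W
      \<and> (\<forall>w\<in>W. core_at (expand (Gs I) X A) \<psi> w \<and> w \<in> upred (expand (Gs I) X A) C)"
  proof (intro exI[of _ W'] conjI)
    show "W' \<subseteq> verts (expand (Gs I) X A)" using W'v by simp
    show "finite W'" using cp(2) W'_def by simp
    show "farset (expand (Gs I) X A) (2 * r') W'"
      unfolding farset_expand
      by (rule farset_Gs_G, rule farset_subset[OF cp(3)]) (auto simp: W'_def)
  qed (use pkI props in auto)
  then have "models (expand (Gs I) X A) (variant C M (pk k I) (BEx m' r' x \<psi>))"
    using models_varEx_set[OF bp(2) sy] by blast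
  then show ?thesis using b by simp
qed

lemma var_All:
  assumes k: "k < length bs" and b: "bs ! k = BAll m' r' x \<psi>" and I: "I \<in> cover l r n"
    and A: "D \<inter> LP I \<subseteq> A"
  shows "models (expand (Gs I) X A) (variant C M (pk k I) (bs ! k))"
proof -
  have inb: "BAll m' r' x \<psi> \<in> set bs" using k b nth_mem by metis
  have bp: "local_fm r' x \<psi>" "fv \<psi> \<subseteq> {x}" "r' \<le> r" using basic_props[OF inb] by blast+
  have gd: "xpos X \<psi>" "preds \<psi> \<subseteq> L \<union> {X}" using core_good[OF inb] by auto
  define S where "S = Cen k"
  have cp: "S \<subseteq> verts G" "finite S" "farset G (2 * r') S" "card S \<le> m'"
    "\<forall>w\<in>S. \<not> core_at (expand G X D) \<psi> w"
    "\<forall>W\<subseteq>verts G. farset G (2 * r') W \<and> (\<forall>w\<in>W. \<not> core_at (expand G X D) \<psi> w) \<longrightarrow> card W \<le> card S"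
    using cenk[OF k] b unfolding cen_prop_def S_def by auto
  have gS: "\<forall>s\<in>S. goodp n (lam s)" using good k S_def by blast
  define B where "B = LP (mid r I)"
  have pkI: "pk k I \<ge> card (S \<inter> B)" unfolding pk_def S_def B_def by simp
  have sy: "symg (expand (Gs I) X A)" using symGs by (simp add: symg_expand)
  have upM: "upred (expand (Gs I) X A) M = B" using MnL unfolding B_def by (simp add: upred_Gs)
  have "\<not> (\<exists>T\<subseteq>verts (expand (Gs I) X A). finite T \<and> card T = Suc (pk k I) \<and> farset (expand (Gs I) X A) (2 * r') T
      \<and> (\<forall>t\<in>T. t \<in> upred (expand (Gs I) X A) M \<and> \<not> core_at (expand (Gs I) X A) \<psi> t))"
  proof
    assume "\<exists>T\<subseteq>verts (expand (Gs I) X A). finite T \<and> card T = Suc (pk k I) \<and> farset (expand (Gs I) X A) (2 * r') T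
      \<and> (\<forall>t\<in>T. t \<in> upred (expand (Gs I) X A) M \<and> \<not> core_at (expand (Gs I) X A) \<psi> t)"
    then obtain T where T: "T \<subseteq> verts (Gs I)" "finite T" "card T = Suc (pk k I)" "farset (Gs I) (2 * r') T"
      "\<forall>t\<in>T. t \<in> B \<and> \<not> core_at (expand (Gs I) X A) \<psi> t"
      using upM by (auto simp: farset_expand)
    have tB: "t \<in> T \<Longrightarrow> t \<in> verts G \<and> lam t \<in> mid r I" for t using T(5) unfolding B_def by (auto simp: in_LP)
    have badT: "t \<in> T \<Longrightarrow> \<not> core_at (expand G X D) \<psi> t" for t
    proof
      assume t: "t \<in> T" and c: "core_at (expand G X D) \<psi> t"
      have "core_at (expand (Gs I) X (D \<inter> LP I)) \<psi> t"
        using core_loc[OF bp(1,2) gd(2) _ Dloc[OF I _ _ bp(3)]] tB[OF t] c by simp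
      then have "core_at (expand (Gs I) X A) \<psi> t" using core_mono[OF gd(1) A] by blast
      then show False using T(5) t by blast
    qed
    have near: "t \<in> T \<Longrightarrow> \<exists>s\<in>S. \<bar>lam s - lam t\<bar> \<le> 2 * int r" for t
    proof (rule ccontr)
      assume t: "t \<in> T" and nn: "\<not> (\<exists>s\<in>S. \<bar>lam s - lam t\<bar> \<le> 2 * int r)"
      have tS: "t \<notin> S" using nn by force
      have far: "farset G (2 * r') (insert t S)"
        unfolding farset_def
      proof (intro ballI impI notI)
        fix u w assume u: "u \<in> insert t S" and w: "w \<in> insert t S" and ne: "u \<noteq> w" and d: "dle G (2 * r') u w"
        have lw: "\<bar>lam u - lam w\<bar> \<le> int (2 * r')" using dle_layer[OF lay d] .
        show False
        proof (cases "u = t")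
          case True
          then have "w \<in> S" using w ne by auto
          then show False using nn lw True bp(3) by force
        next
          case False
          then have uS: "u \<in> S" using u by auto
          show False
          proof (cases "w = t")
            case True
            then show False using nn lw uS bp(3) by force
          next
            case False
            then have "w \<in> S" using w by auto
            then show False using cp(3) uS ne d unfolding farset_def by blast
          qed
        qed
      qed
      have "card (insert t S) \<le> card S"
        using cp(6) far cp(1) tB[OF t] badT[OF t] cp(5) by (intro cp(6)[rule_format]) auto
      then show False using tS cp(2) by simp
    qed
    have mid2: "t \<in> T \<Longrightarrow> lam t \<in> mid (2 * r) I" for t
    proof -
      assume t: "t \<in> T"
      obtain s where s: "s \<in> S" "\<bar>lam s - lam t\<bar> \<le> 2 * int r" using near[OF t] by blast
      have "lam t \<in> mid (2 * r) (blkI n (lam s))" using good_ball[of n "lam s" "lam t"] gS s by (simp add: abs_minus_commute)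
      moreover have "blkI n (lam s) = I"
        using mid_disj[OF blkI_in I, of "lam t"] calculation mid2_sub tB[OF t] by blast
      ultimately show "lam t \<in> mid (2 * r) I" by simp
    qed
    define S' where "S' = (S - B) \<union> T"
    have S'v: "S' \<subseteq> verts G" using cp(1) T(1) verts_Gs LP_sub S'_def by blast
    have S'bad: "\<forall>w\<in>S'. \<not> core_at (expand G X D) \<psi> w" using cp(5) badT S'_def by blast
    have S'far: "farset G (2 * r') S'"
      unfolding farset_def
    proof (intro ballI impI notI)
      fix u w assume u: "u \<in> S'" and w: "w \<in> S'" and ne: "u \<noteq> w" and d: "dle G (2 * r') u w"
      have lw: "\<bar>lam u - lam w\<bar> \<le> 2 * int r" using dle_layer[OF lay d] bp(3) by linarith
      have cross: "s \<in> S - B \<Longrightarrow> t \<in> T \<Longrightarrow> \<bar>lam s - lam t\<bar> \<le> 2 * int r \<Longrightarrow> False" for s t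
      proof -
        assume s: "s \<in> S - B" and t: "t \<in> T" and st: "\<bar>lam s - lam t\<bar> \<le> 2 * int r"
        have gs: "goodp n (lam s)" using gS s by blast
        have "lam t \<in> mid (2 * r) (blkI n (lam s))" using good_ball[OF gs] st by (simp add: abs_minus_commute)
        then have "blkI n (lam s) = I"
          using mid_disj[OF blkI_in I, of "lam t"] mid2_sub tB[OF t] by blast
        moreover have "lam s \<in> mid (2 * r) (blkI n (lam s))" using good_ball[OF gs] by simp
        ultimately have "lam s \<in> mid r I" using mid2_sub by blast
        then show False using s cp(1) unfolding B_def by (auto simp: in_LP)
      qed
      consider "u \<in> S - B" "w \<in> S - B" | "u \<in> S - B" "w \<in> T" | "u \<in> T" "w \<in> S - B" | "u \<in> T" "w \<in> T"
        using u w S'_def by blast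
      then show False
      proof cases
        case 1 then show False using cp(3) ne d unfolding farset_def by blast
      next
        case 2 then show False using cross lw by blast
      next
        case 3 then show False using cross lw by (metis abs_minus_commute)
      next
        case 4
        have "dle (Gs I) (2 * r') u w"
          using dle_G_Gs[OF d] Dloc(1)[OF I _ mid2[OF 4(1)], of "2 * r'"] tB[OF 4(1)] bp(3) by simp
        then show False using T(4) 4 ne unfolding farset_def by blast
      qed
    qed
    have "card S' \<le> card S" using cp(6) S'v S'far S'bad by blast
    moreover have "card S' = card (S - B) + card T"
      unfolding S'_def by (rule card_Un_disjoint) (use cp(2) T(2) T(5) in auto)
    moreover have "card (S - B) = card S - card (S \<inter> B)"
      using card_Diff_subset_Int[of S B] cp(2) by simp
    moreover have "card (S \<inter> B) \<le> card S" using cp(2) by (simp add: card_mono)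
    ultimately show False using T(3) pkI by linarith
  qed
  then have "models (expand (Gs I) X A) (variant C M (pk k I) (BAll m' r' x \<psi>))"
    by (rule iffD2[OF models_varAll_set[OF bp(2) sy]])
  then show ?thesis using b by simp
qed

end


context good_setting
begin

lemma I0_in: "I0 \<in> cover l r n"
  unfolding I0_def in_cover by blast

lemma plan_pk:
  assumes k: "k < length bs"
  shows "plan (cover l r n) (b_spread (bs ! k)) (pk k)"
proof -
  define R where "R = cover l r n"
  define S where "S = Cen k"
  define e where "e = b_spread (bs ! k) - card S"
  have cp: "S \<subseteq> verts G" "finite S" "card S \<le> b_spread (bs ! k)"
    using cenk[OF k] unfolding cen_prop_def S_def by auto
  define F where "F = insert I0 ((\<lambda>v. blkI n (lam v)) ` S)"
  have finF: "finite F" unfolding F_def using cp(2) by simp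
  have FR: "F \<subseteq> R" unfolding F_def R_def using I0_in blkI_in by blast
  have pkd: "pk k I = card (S \<inter> LP (mid r I)) + (if I = I0 then e else 0)" for I
    unfolding pk_def S_def e_def by simp
  have supp: "{I \<in> R. pk k I \<noteq> 0} \<subseteq> F"
  proof
    fix I assume I: "I \<in> {I \<in> R. pk k I \<noteq> 0}"
    show "I \<in> F"
    proof (cases "I = I0")
      case True then show ?thesis unfolding F_def by simp
    next
      case False
      then have "card (S \<inter> LP (mid r I)) \<noteq> 0" using I pkd by simp
      then have "S \<inter> LP (mid r I) \<noteq> {}" by (metis card.empty)
      then obtain v where v: "v \<in> S" "lam v \<in> mid r I" by (auto simp: in_LP)
      then have "I = blkI n (lam v)" using mid_unique I R_def by blast
      then show ?thesis unfolding F_def using v by blast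
    qed
  qed
  have "(\<Sum>I\<in>{I \<in> R. pk k I \<noteq> 0}. pk k I) = (\<Sum>I\<in>F. pk k I)"
    by (rule sum.mono_neutral_left[OF finF supp]) (use FR in auto)
  also have "\<dots> = (\<Sum>I\<in>F. card (S \<inter> LP (mid r I))) + (\<Sum>I\<in>F. if I = I0 then e else 0)"
    unfolding pkd by (rule sum.distrib)
  also have "(\<Sum>I\<in>F. if I = I0 then e else 0) = e"
    using finF by (simp add: F_def)
  also have "(\<Sum>I\<in>F. card (S \<inter> LP (mid r I))) = card S"
  proof -
    have U: "S = (\<Union>I\<in>F. S \<inter> LP (mid r I))"
    proof
      show "S \<subseteq> (\<Union>I\<in>F. S \<inter> LP (mid r I))"
      proof
        fix v assume v: "v \<in> S"
        have "v \<in> S \<inter> LP (mid r (blkI n (lam v)))" using v cp(1) blkI_mid by (auto simp: in_LP)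
        moreover have "blkI n (lam v) \<in> F" unfolding F_def using v by blast
        ultimately show "v \<in> (\<Union>I\<in>F. S \<inter> LP (mid r I))" by blast
      qed
    qed auto
    have "card (\<Union>I\<in>F. S \<inter> LP (mid r I)) = (\<Sum>I\<in>F. card (S \<inter> LP (mid r I)))"
    proof (rule card_UN_disjoint[OF finF])
      show "\<forall>I\<in>F. finite (S \<inter> LP (mid r I))" using cp(2) by simp
      show "\<forall>I\<in>F. \<forall>J\<in>F. I \<noteq> J \<longrightarrow> S \<inter> LP (mid r I) \<inter> (S \<inter> LP (mid r J)) = {}"
      proof (intro ballI impI)
        fix I J assume IJ: "I \<in> F" "J \<in> F" "I \<noteq> J"
        show "S \<inter> LP (mid r I) \<inter> (S \<inter> LP (mid r J)) = {}"
        proof (rule ccontr)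
          assume "S \<inter> LP (mid r I) \<inter> (S \<inter> LP (mid r J)) \<noteq> {}"
          then obtain w where "lam w \<in> mid r I" "lam w \<in> mid r J" by (auto simp: in_LP)
          then show False using mid_disj[of I n J "lam w"] IJ FR R_def by blast
        qed
      qed
    qed
    then show ?thesis using U by simp
  qed
  finally have "(\<Sum>I\<in>{I \<in> R. pk k I \<noteq> 0}. pk k I) = b_spread (bs ! k)"
    using cp(3) e_def by simp
  moreover have "finite {I \<in> R. pk k I \<noteq> 0}" using finite_subset[OF supp finF] .
  ultimately show ?thesis unfolding plan_def R_def by blast
qed

definition psl :: "(int set \<Rightarrow> nat) list" where
  "psl = map pk [0..<length bs]"

lemma psl_len: "length psl = length bs" by (simp add: psl_def)

lemma psl_nth: "k < length bs \<Longrightarrow> psl ! k = pk k" by (simp add: psl_def)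

lemma psl_I: "k < length bs \<Longrightarrow> map (\<lambda>f. f I) psl ! k = pk k I" by (simp add: psl_def)

lemma models_all:
  assumes I: "I \<in> cover l r n" and A: "D \<inter> LP I \<subseteq> A"
  shows "models (expand (Gs I) X A) (bconj_variant C M bs (map (\<lambda>f. f I) psl))"
proof -
  have "\<forall>k<length bs. models (expand (Gs I) X A) (variant C M (map (\<lambda>f. f I) psl ! k) (bs ! k))"
  proof (intro allI impI)
    fix k assume k: "k < length bs"
    have "models (expand (Gs I) X A) (variant C M (pk k I) (bs ! k))"
    proof (cases "bs ! k")
      case (BEx m' r' x \<psi>) then show ?thesis using var_Ex[OF k _ I A] by blast
    next
      case (BAll m' r' x \<psi>) then show ?thesis using var_All[OF k _ I A] by blast
    qed
    then show "models (expand (Gs I) X A) (variant C M (map (\<lambda>f. f I) psl ! k) (bs ! k))"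
      using psl_I[OF k] by simp
  qed
  then show ?thesis using iffD2[OF models_bvariant[of "map (\<lambda>f. f I) psl" bs]] psl_len by simp
qed

lemma DI_sub: "D \<inter> LP I \<subseteq> verts (Gs I)" by (simp add: verts_Gs)

lemma Asel_def:
  assumes I: "I \<in> cover l r n"
  shows "Asel I (map (\<lambda>f. f I) psl) \<noteq> None"
  using spec_I[OF I, of "map (\<lambda>f. f I) psl"] psl_len models_all[OF I DI_sub] by auto

lemma admissible_psl: "(cover l r n, psl) \<in> admissible Asel l r bs"
  unfolding admissible_def
  using psl_len plan_pk psl_nth Asel_def by (auto simp: is_cover_def)

end


context asel_setting
begin

lemma card_A_le:
  assumes "(R, ps) \<in> admissible Asel l r bs"
  shows "card (A_Rp Asel R ps) \<le> a_Rp Asel R ps"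
proof -
  obtain n where R: "R = cover l r n" using assms by (auto simp: admissible_def is_cover_def)
  have len: "length ps = length bs" and def: "\<forall>I\<in>R. Asel I (map (\<lambda>f. f I) ps) \<noteq> None"
    using assms by (auto simp: admissible_def)
  define AI where "AI I = the (Asel I (map (\<lambda>f. f I) ps))" for I
  have AIv: "I \<in> R \<Longrightarrow> AI I \<subseteq> LP I" for I
    using spec_some(1)[of I n "map (\<lambda>f. f I) ps"] def R len unfolding AI_def by (simp add: verts_Gs)
  have finAI: "I \<in> R \<Longrightarrow> finite (AI I)" for I using AIv finite_subset LP_sub finG by metis
  define Sp where "Sp = {I \<in> R. card (AI I) \<noteq> 0}"
  have SpF: "Sp \<subseteq> {I \<in> cover l r n. \<exists>v\<in>verts G. lam v \<in> I}"
  proof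
    fix I assume "I \<in> Sp"
    then have I: "I \<in> R" "AI I \<noteq> {}" unfolding Sp_def by auto
    then obtain v where "v \<in> AI I" by blast
    then have "v \<in> verts G" "lam v \<in> I" using AIv[OF I(1)] by (auto simp: in_LP)
    then show "I \<in> {I \<in> cover l r n. \<exists>v\<in>verts G. lam v \<in> I}" using I(1) R by blast
  qed
  have finSp: "finite Sp" using finite_subset[OF SpF finite_cover_meeting[OF finG]] .
  have "A_Rp Asel R ps = (\<Union>I\<in>Sp. AI I)"
  proof
    show "A_Rp Asel R ps \<subseteq> (\<Union>I\<in>Sp. AI I)"
    proof
      fix x assume "x \<in> A_Rp Asel R ps"
      then obtain I where I: "I \<in> R" "x \<in> AI I" unfolding A_Rp_def AI_def by blast
      then have "card (AI I) \<noteq> 0" using finAI[OF I(1)] by auto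
      then show "x \<in> (\<Union>I\<in>Sp. AI I)" using I Sp_def by blast
    qed
  qed (auto simp: A_Rp_def AI_def Sp_def)
  then have "card (A_Rp Asel R ps) \<le> (\<Sum>I\<in>Sp. card (AI I))" using card_UN_le[OF finSp] by simp
  also have "\<dots> = a_Rp Asel R ps" unfolding a_Rp_def Sp_def AI_def ..
  finally show ?thesis .
qed

end

context good_setting
begin

lemma gamma_le:
  assumes I: "I \<in> cover l r n"
  shows "gamma (Gs I) X (bconj_variant C M bs (map (\<lambda>f. f I) psl)) \<le> card (D \<inter> LP I)"
  unfolding gamma_def by (rule Least_le) (use DI_sub models_all[OF I subset_refl] in blast)

lemma card_AI:
  assumes I: "I \<in> cover l r n" and e: "\<epsilon>1 > 0"
  shows "real (card (the (Asel I (map (\<lambda>f. f I) psl)))) \<le> (1 + \<epsilon>1) * real (card (D \<inter> LP I))"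
proof -
  have "real (card (the (Asel I (map (\<lambda>f. f I) psl))))
      \<le> (1 + \<epsilon>1) * real (gamma (Gs I) X (bconj_variant C M bs (map (\<lambda>f. f I) psl)))"
    using spec_some(3)[OF I _ Asel_def[OF I]] psl_len by simp
  also have "\<dots> \<le> (1 + \<epsilon>1) * real (card (D \<inter> LP I))"
    using gamma_le[OF I] e by (intro mult_left_mono) auto
  finally show ?thesis .
qed

lemma finD: "finite D" using Dsub finG finite_subset by blast

lemma cost_eq:
  "(\<Sum>I\<in>{I \<in> cover l r n. \<exists>v\<in>D. lam v \<in> I}. card (D \<inter> LP I)) = (\<Sum>v\<in>D. cnt n (lam v))"
proof -
  define FD where "FD = {I \<in> cover l r n. \<exists>v\<in>D. lam v \<in> I}"
  have finFD: "finite FD" unfolding FD_def by (rule finite_cover_meeting[OF finD])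
  have c1: "card (D \<inter> LP I) = (\<Sum>v\<in>D. if lam v \<in> I then 1 else 0)" for I
  proof -
    have "D \<inter> LP I = {v \<in> D. lam v \<in> I}" using Dsub by (auto simp: in_LP)
    then have "card (D \<inter> LP I) = (\<Sum>v\<in>{v \<in> D. lam v \<in> I}. 1)" by simp
    also have "\<dots> = (\<Sum>v\<in>D. if lam v \<in> I then 1 else 0)" by (rule sum.inter_filter[OF finD])
    finally show ?thesis .
  qed
  have c2: "v \<in> D \<Longrightarrow> (\<Sum>I\<in>FD. if lam v \<in> I then 1 else 0) = cnt n (lam v)" for v
  proof -
    assume v: "v \<in> D"
    have "(\<Sum>I\<in>FD. if lam v \<in> I then 1 else 0) = (\<Sum>I\<in>{I \<in> FD. lam v \<in> I}. 1::nat)"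
      by (rule sum.inter_filter[OF finFD, symmetric])
    also have "{I \<in> FD. lam v \<in> I} = {I \<in> cover l r n. lam v \<in> I}" using v unfolding FD_def by blast
    also have "(\<Sum>I\<in>{I \<in> cover l r n. lam v \<in> I}. 1::nat) = cnt n (lam v)"
      using card_cover_containing by simp
    finally show ?thesis .
  qed
  have "(\<Sum>I\<in>FD. card (D \<inter> LP I)) = (\<Sum>I\<in>FD. \<Sum>v\<in>D. if lam v \<in> I then 1 else 0)"
    using c1 by simp
  also have "\<dots> = (\<Sum>v\<in>D. \<Sum>I\<in>FD. if lam v \<in> I then 1 else 0)" by (rule sum.swap)
  also have "\<dots> = (\<Sum>v\<in>D. cnt n (lam v))" using c2 by (intro sum.cong) auto
  finally show ?thesis unfolding FD_def .
qed

lemma a_bound: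
  assumes e: "\<epsilon>1 > 0"
  shows "real (a_Rp Asel (cover l r n) psl) \<le> (1 + \<epsilon>1) * real (\<Sum>v\<in>D. cnt n (lam v))"
proof -
  define R where "R = cover l r n"
  define AI where "AI I = the (Asel I (map (\<lambda>f. f I) psl))" for I
  define FD where "FD = {I \<in> R. \<exists>v\<in>D. lam v \<in> I}"
  have finFD: "finite FD" unfolding FD_def R_def by (rule finite_cover_meeting[OF finD])
  have cAI: "I \<in> R \<Longrightarrow> real (card (AI I)) \<le> (1 + \<epsilon>1) * real (card (D \<inter> LP I))" for I
    using card_AI[OF _ e] unfolding AI_def R_def by blast
  have supp: "{I \<in> R. card (AI I) \<noteq> 0} \<subseteq> FD"
  proof
    fix I assume "I \<in> {I \<in> R. card (AI I) \<noteq> 0}"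
    then have I: "I \<in> R" "card (AI I) \<noteq> 0" by auto
    have "card (D \<inter> LP I) \<noteq> 0"
    proof
      assume "card (D \<inter> LP I) = 0"
      then have "real (card (AI I)) \<le> 0" using cAI[OF I(1)] by simp
      then show False using I(2) by simp
    qed
    then have "D \<inter> LP I \<noteq> {}" by (metis card.empty)
    then obtain v where "v \<in> D" "lam v \<in> I" by (auto simp: in_LP)
    then show "I \<in> FD" using I(1) unfolding FD_def by blast
  qed
  have "a_Rp Asel R psl = (\<Sum>I\<in>FD. card (AI I))"
    unfolding a_Rp_def AI_def[symmetric]
    by (rule sum.mono_neutral_left[OF finFD supp]) (auto simp: FD_def)
  then have "real (a_Rp Asel R psl) = (\<Sum>I\<in>FD. real (card (AI I)))" by simp
  also have "\<dots> \<le> (\<Sum>I\<in>FD. (1 + \<epsilon>1) * real (card (D \<inter> LP I)))"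
    using cAI by (intro sum_mono) (auto simp: FD_def)
  also have "\<dots> = (1 + \<epsilon>1) * real (\<Sum>I\<in>FD. card (D \<inter> LP I))"
    by (simp add: sum_distrib_left)
  also have "(\<Sum>I\<in>FD. card (D \<inter> LP I)) = (\<Sum>v\<in>D. cnt n (lam v))"
    using cost_eq unfolding FD_def R_def .
  finally show ?thesis unfolding R_def .
qed

end


context asel_setting
begin

lemma exists_D:
  assumes "models (expand G X (verts G)) (bconj_fm bs)"
  shows "\<exists>D. D \<subseteq> verts G \<and> card D = gamma G X (bconj_fm bs) \<and> models (expand G X D) (bconj_fm bs)"
proof -
  have ex: "\<exists>k. \<exists>A\<subseteq>verts G. card A = k \<and> models (expand G X A) (bconj_fm bs)"
    using assms by blast
  show ?thesis
    using LeastI_ex[OF ex] unfolding gamma_def by blast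
qed

lemma sum_cost:
  assumes "finite D"
  shows "(\<Sum>n\<in>{0..<N}. \<Sum>v\<in>D. cnt n (lam v)) = card D * nat l"
proof -
  have "(\<Sum>n\<in>{0..<N}. \<Sum>v\<in>D. cnt n (lam v)) = (\<Sum>v\<in>D. \<Sum>n\<in>{0..<N}. cnt n (lam v))"
    by (rule sum.swap)
  also have "\<dots> = (\<Sum>v\<in>D. nat l)" using sum_cnt by simp
  finally show ?thesis by simp
qed

lemma cost_ge: "card D \<le> (\<Sum>v\<in>D. cnt n (lam v))"
proof -
  have "card D = (\<Sum>v\<in>D. 1::nat)" by simp
  also have "\<dots> \<le> (\<Sum>v\<in>D. cnt n (lam v))" using cnt_pos by (intro sum_mono) auto
  finally show ?thesis .
qed

lemma averaging:
  fixes \<epsilon>2 :: real and Good :: "int set" and D :: "'b set"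
  assumes e2: "\<epsilon>2 > 0" and finD: "finite D" and GoodN: "Good \<subseteq> {0..<N}"
    and key: "real (card Good) * \<epsilon>2 \<ge> 2 * real r" "Good \<noteq> {}"
  shows "\<exists>n\<in>Good. real (\<Sum>v\<in>D. cnt n (lam v)) \<le> (1 + \<epsilon>2) * real (card D)"
proof (rule ccontr)
  assume "\<not> (\<exists>n\<in>Good. real (\<Sum>v\<in>D. cnt n (lam v)) \<le> (1 + \<epsilon>2) * real (card D))"
  then have gt: "\<forall>n\<in>Good. real (\<Sum>v\<in>D. cnt n (lam v)) > (1 + \<epsilon>2) * real (card D)" by auto
  define cost where "cost n = real (\<Sum>v\<in>D. cnt n (lam v))" for n
  define d where "d = real (card D)"
  define Bad where "Bad = {0..<N} - Good"
  have finG: "finite Good" using GoodN finite_subset by blast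
  have finB: "finite Bad" unfolding Bad_def by simp
  have cardGB: "real (card Good) + real (card Bad) = real_of_int N"
  proof -
    have "card Good + card Bad = card {0..<N}"
      unfolding Bad_def using card_Diff_subset[OF finG GoodN] card_mono[OF _ GoodN] by simp
    then show ?thesis using N_pos by simp
  qed
  have tot: "(\<Sum>n\<in>{0..<N}. cost n) = d * real_of_int l"
  proof -
    have "(\<Sum>n\<in>{0..<N}. cost n) = real (\<Sum>n\<in>{0..<N}. \<Sum>v\<in>D. cnt n (lam v))"
      unfolding cost_def by simp
    also have "\<dots> = real (card D * nat l)" using sum_cost[OF finD] by simp
    also have "\<dots> = d * real_of_int l" using l_pos unfolding d_def by simp
    finally show ?thesis .
  qed
  have split: "(\<Sum>n\<in>{0..<N}. cost n) = (\<Sum>n\<in>Good. cost n) + (\<Sum>n\<in>Bad. cost n)"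
    unfolding Bad_def using sum.subset_diff[OF GoodN, of cost] by simp
  have sG: "(\<Sum>n\<in>Good. cost n) > (\<Sum>n\<in>Good. (1 + \<epsilon>2) * d)"
    using sum_strict_mono[OF finG key(2), of "\<lambda>n. (1 + \<epsilon>2) * d" cost] gt unfolding cost_def d_def by auto
  have sB: "(\<Sum>n\<in>Bad. cost n) \<ge> (\<Sum>n\<in>Bad. d)"
  proof (rule sum_mono)
    fix n assume "n \<in> Bad"
    show "d \<le> cost n" unfolding cost_def d_def using cost_ge[of D n] by (simp only: of_nat_le_iff)
  qed
  have "d * real_of_int l > real (card Good) * (1 + \<epsilon>2) * d + real (card Bad) * d"
    using tot split sG sB by simp
  moreover have "real_of_int l = real_of_int N + 2 * real r" using l_eq by simp
  ultimately have "d * (real_of_int N + 2 * real r) > real (card Good) * (1 + \<epsilon>2) * d + real (card Bad) * d"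
    by simp
  then have h: "d * real (card Bad) + (d * real (card Good) + \<epsilon>2 * (d * real (card Good)))
      < d * real_of_int N + d * (real r * 2)" by (simp add: algebra_simps)
  have eqN: "d * real_of_int N = d * real (card Bad) + d * real (card Good)"
    using cardGB by (metis add.commute distrib_left)
  have "\<epsilon>2 * (d * real (card Good)) < d * (real r * 2)" using h eqN by linarith
  then have "d * (2 * real r) > real (card Good) * \<epsilon>2 * d" by (simp add: algebra_simps)
  moreover have "d \<ge> 0" unfolding d_def by simp
  ultimately show False using key(1)
    by (metis mult.commute mult_right_mono not_le)
qed

lemma complete:
  fixes \<epsilon>2 :: real
  assumes e1: "\<epsilon>1 > 0" and e2: "\<epsilon>2 > 0"
    and hl: "real_of_int l > 2 * real r * (1 + max (2 / \<epsilon>2) (6 * real (bconj_spread bs) * real (length bs)))"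
    and mo: "models (expand G X (verts G)) (bconj_fm bs)"
  shows "\<exists>p\<in>admissible Asel l r bs. real (a_Rp Asel (fst p) (snd p))
            \<le> (1 + \<epsilon>1) * (1 + \<epsilon>2) * real (gamma G X (bconj_fm bs))"
proof -
  obtain D where D: "D \<subseteq> verts G" "card D = gamma G X (bconj_fm bs)" "models (expand G X D) (bconj_fm bs)"
    using exists_D[OF mo] by blast
  obtain Cen where cen: "\<forall>k<length bs. cen_prop D (bs ! k) (Cen k)" using centers[OF D(3)] by blast
  define m where "m = bconj_spread bs"
  define t where "t = length bs"
  define CA where "CA = (\<Union>k\<in>{..<t}. Cen k)"
  have cenp: "k < t \<Longrightarrow> finite (Cen k) \<and> card (Cen k) \<le> m" for k
  proof -
    assume k: "k < t"
    have "finite (Cen k)" "card (Cen k) \<le> b_spread (bs ! k)" using cen k t_def unfolding cen_prop_def by auto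
    moreover have "b_spread (bs ! k) \<le> m" using spread_le[of "bs ! k"] k t_def m_def by simp
    ultimately show ?thesis by simp
  qed
  have finCA: "finite CA" unfolding CA_def using cenp by auto
  have cardCA: "card CA \<le> t * m"
  proof -
    have "card CA \<le> (\<Sum>k\<in>{..<t}. card (Cen k))" unfolding CA_def by (rule card_UN_le) simp
    also have "\<dots> \<le> (\<Sum>k\<in>{..<t}. m)" using cenp by (intro sum_mono) auto
    finally show ?thesis by simp
  qed
  define Good where "Good = {n \<in> {0..<N}. \<forall>c\<in>CA. goodp n (lam c)}"
  define Bad where "Bad = {0..<N} - Good"
  have GoodN: "Good \<subseteq> {0..<N}" unfolding Good_def by auto
  have BadU: "Bad \<subseteq> (\<Union>c\<in>CA. {n \<in> {0..<N}. \<not> goodp n (lam c)})" unfolding Bad_def Good_def by auto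
  have cardBad: "card Bad \<le> 6 * r * (t * m)"
  proof -
    have "card Bad \<le> card (\<Union>c\<in>CA. {n \<in> {0..<N}. \<not> goodp n (lam c)})"
    proof (rule card_mono[OF _ BadU])
      show "finite (\<Union>c\<in>CA. {n \<in> {0..<N}. \<not> goodp n (lam c)})"
        using finCA by (intro finite_UN_I) (auto intro: finite_subset[of _ "{0..<N}"])
    qed
    also have "\<dots> \<le> (\<Sum>c\<in>CA. card {n \<in> {0..<N}. \<not> goodp n (lam c)})" by (rule card_UN_le[OF finCA])
    also have "\<dots> \<le> (\<Sum>c\<in>CA. 6 * r)" using bad_count by (intro sum_mono) auto
    also have "\<dots> = 6 * r * card CA" by simp
    also have "\<dots> \<le> 6 * r * (t * m)" using cardCA by simp
    finally show ?thesis .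
  qed
  have finGood: "finite Good" using GoodN finite_subset by blast
  have cGB: "real (card Good) + real (card Bad) = real_of_int N"
  proof -
    have "card Good + card Bad = card {0..<N}"
      unfolding Bad_def using card_Diff_subset[OF finGood GoodN] card_mono[OF _ GoodN] by simp
    then show ?thesis using N_pos by simp
  qed
  have NN: "real_of_int N > 2 * real r * max (2 / \<epsilon>2) (6 * real m * real t)"
    using hl l_eq unfolding m_def t_def by (simp add: algebra_simps)
  have rB: "real (card Bad) \<le> 6 * real r * real t * real m"
    using cardBad by (metis (no_types, lifting) mult.assoc of_nat_le_iff of_nat_mult of_nat_numeral)
  have key: "real (card Good) * \<epsilon>2 \<ge> 2 * real r \<and> real (card Good) > 0"
  proof (cases "r = 0")
    case True
    then have "real (card Bad) = 0" using rB by simp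
    then have "real (card Good) = real_of_int N" using cGB by simp
    then show ?thesis using True N_pos e2 by simp
  next
    case False
    then have rpos: "real r > 0" by simp
    have m1: "max (2 / \<epsilon>2) (6 * real m * real t) \<ge> 2 / \<epsilon>2" by simp
    have m2: "max (2 / \<epsilon>2) (6 * real m * real t) \<ge> 6 * real m * real t" by simp
    have n1: "real_of_int N > 2 * real r * (2 / \<epsilon>2)"
      using NN mult_left_mono[OF m1, of "2 * real r"] rpos by linarith
    have n2: "real_of_int N \<ge> 2 * real r * (6 * real m * real t)"
      using NN mult_left_mono[OF m2, of "2 * real r"] rpos by linarith
    have "real (card Bad) * 2 \<le> real_of_int N" using rB n2 by (simp add: algebra_simps)
    then have g2: "real (card Good) * 2 \<ge> real_of_int N" using cGB by linarith
    have "real_of_int N * \<epsilon>2 > 4 * real r"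
      using n1 e2 by (simp add: field_simps)
    then have "real (card Good) * 2 * \<epsilon>2 > 4 * real r"
      using mult_right_mono[OF g2, of \<epsilon>2] e2 by linarith
    moreover have "real (card Good) > 0" using g2 N_pos by linarith
    ultimately show ?thesis by linarith
  qed
  have neG: "Good \<noteq> {}" using key by auto
  have finD: "finite D" using D(1) finG finite_subset by blast
  obtain n where n: "n \<in> Good" "real (\<Sum>v\<in>D. cnt n (lam v)) \<le> (1 + \<epsilon>2) * real (card D)"
    using averaging[OF e2 finD GoodN conjunct1[OF key] neG] by blast
  have goodn: "\<forall>k<length bs. \<forall>c\<in>Cen k. goodp n (lam c)"
    using n(1) unfolding Good_def CA_def t_def by blast
  interpret gs: good_setting l r L X C M bs G lam Asel \<epsilon>1 D Cen n
    by (intro good_setting.intro asel_setting_axioms good_setting_axioms.intro D(1) cen goodn)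
  have "real (a_Rp Asel (cover l r n) gs.psl) \<le> (1 + \<epsilon>1) * real (\<Sum>v\<in>D. cnt n (lam v))"
    by (rule gs.a_bound[OF e1])
  also have "\<dots> \<le> (1 + \<epsilon>1) * ((1 + \<epsilon>2) * real (card D))"
    using n(2) e1 by (intro mult_left_mono) auto
  finally have "real (a_Rp Asel (cover l r n) gs.psl) \<le> (1 + \<epsilon>1) * (1 + \<epsilon>2) * real (gamma G X (bconj_fm bs))"
    using D(2) by (simp add: mult.assoc)
  then show ?thesis using gs.admissible_psl by (intro bexI[of _ "(cover l r n, gs.psl)"]) auto
qed

end


theorem mainTheorem15:
  fixes L :: "'p set" and X C M :: 'p and bs :: "'p basic list"
    and m r t :: nat and \<epsilon>1 \<epsilon>2 :: real
    and G :: "('v, 'p) interp" and lam :: "'v \<Rightarrow> int"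
    and Asel :: "int set \<Rightarrow> nat list \<Rightarrow> 'v set option" and l :: int
  assumes "finite L" and "X \<notin> L"
    and "\<forall>b\<in>set bs. wf_basic b"
    and "preds (bconj_fm bs) \<subseteq> L \<union> {X}"
    and "X_positive X (bconj_fm bs)"
    and "m = bconj_spread bs" and "r = bconj_range bs" and "t = length bs"
    and "C \<notin> L \<union> {X}" and "M \<notin> L \<union> {X}" and "C \<noteq> M"
    and "\<epsilon>1 > 0" and "\<epsilon>2 > 0"
    and "L_interp L G" and "layering G lam"
    and "\<forall>a b q. a \<le> b \<longrightarrow> length q = t \<longrightarrow>
           (let H = G_sub G lam r C M {a..b}; \<theta> = bconj_variant C M bs q in
             (\<not> models (expand H X (verts H)) \<theta> \<longrightarrow> Asel {a..b} q = None) \<and>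
             (models (expand H X (verts H)) \<theta> \<longrightarrow>
                (\<exists>A. Asel {a..b} q = Some A \<and> A \<subseteq> verts H \<and> models (expand H X A) \<theta>
                     \<and> real (card A) \<le> (1 + \<epsilon>1) * real (gamma H X \<theta>))))"
    and "real_of_int l > 2 * real r * (1 + max (2 / \<epsilon>2) (6 * real m * real t))"
  shows "(\<not> models (expand G X (verts G)) (bconj_fm bs) \<and> admissible Asel l r bs = {})
       \<or> (admissible Asel l r bs \<noteq> {} \<and>
          (\<forall>(R, ps)\<in>admissible Asel l r bs.
             (\<forall>(R', ps')\<in>admissible Asel l r bs. a_Rp Asel R ps \<le> a_Rp Asel R' ps') \<longrightarrow>
               models (expand G X (A_Rp Asel R ps)) (bconj_fm bs)
               \<and> real (card (A_Rp Asel R ps))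
                   \<le> (1 + \<epsilon>1) * (1 + \<epsilon>2) * real (gamma G X (bconj_fm bs))))"
proof -
  have e2: "\<epsilon>2 > 0" and e1: "\<epsilon>1 > 0" using assms by auto
  have hl: "real_of_int l > 2 * real r * (1 + max (2 / \<epsilon>2) (6 * real m * real t))" using assms by blast
  have Npos: "l - 2 * int r > 0"
  proof -
    have "max (2 / \<epsilon>2) (6 * real m * real t) \<ge> 0" using e2 by (simp add: le_max_iff_disj)
    then have "2 * real r * 1 \<le> 2 * real r * (1 + max (2 / \<epsilon>2) (6 * real m * real t))"
      by (intro mult_left_mono) auto
    then have "real_of_int l > 2 * real r" using hl by linarith
    then show ?thesis by linarith
  qed
  have spec': "\<forall>a b q. a \<le> b \<longrightarrow> length q = length bs \<longrightarrow>
           (let H = G_sub G lam r C M {a..b}; \<theta> = bconj_variant C M bs q in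
             (\<not> models (expand H X (verts H)) \<theta> \<longrightarrow> Asel {a..b} q = None) \<and>
             (models (expand H X (verts H)) \<theta> \<longrightarrow>
                (\<exists>A. Asel {a..b} q = Some A \<and> A \<subseteq> verts H \<and> models (expand H X A) \<theta>
                     \<and> real (card A) \<le> (1 + \<epsilon>1) * real (gamma H X \<theta>))))"
    using assms(8) assms(16) by simp
  interpret as: asel_setting l r L X C M bs G lam Asel \<epsilon>1
  proof (intro asel_setting.intro setting.intro cov.intro setting_axioms.intro asel_setting_axioms.intro)
    show "l - 2 * int r > 0" by (rule Npos)
  qed (use assms spec' in auto)
  have mono: "models (expand G X A) (bconj_fm bs) \<Longrightarrow> A \<subseteq> verts G \<Longrightarrow> models (expand G X (verts G)) (bconj_fm bs)" for A
    using sat_mono[of X "bconj_fm bs" A "verts G" G] assms(5) unfolding models_def X_positive_def by blast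
  show ?thesis
  proof (cases "models (expand G X (verts G)) (bconj_fm bs)")
    case True
    have hl': "real_of_int l > 2 * real r * (1 + max (2 / \<epsilon>2) (6 * real (bconj_spread bs) * real (length bs)))"
      using hl assms(6,8) by simp
    obtain p where p: "p \<in> admissible Asel l r bs"
      "real (a_Rp Asel (fst p) (snd p)) \<le> (1 + \<epsilon>1) * (1 + \<epsilon>2) * real (gamma G X (bconj_fm bs))"
      using as.complete[OF e1 e2 hl' True] by blast
    have "\<forall>(R, ps)\<in>admissible Asel l r bs.
             (\<forall>(R', ps')\<in>admissible Asel l r bs. a_Rp Asel R ps \<le> a_Rp Asel R' ps') \<longrightarrow>
               models (expand G X (A_Rp Asel R ps)) (bconj_fm bs)
               \<and> real (card (A_Rp Asel R ps))
                   \<le> (1 + \<epsilon>1) * (1 + \<epsilon>2) * real (gamma G X (bconj_fm bs))"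
    proof (intro ballI impI, clarify)
      fix R ps assume adm: "(R, ps) \<in> admissible Asel l r bs"
        and mn: "\<forall>(R', ps')\<in>admissible Asel l r bs. a_Rp Asel R ps \<le> a_Rp Asel R' ps'"
      have le: "a_Rp Asel R ps \<le> a_Rp Asel (fst p) (snd p)" using mn p(1) by (cases p) auto
      have "real (card (A_Rp Asel R ps)) \<le> real (a_Rp Asel R ps)" using as.card_A_le[OF adm] by simp
      also have "\<dots> \<le> real (a_Rp Asel (fst p) (snd p))" using le by simp
      also have "\<dots> \<le> (1 + \<epsilon>1) * (1 + \<epsilon>2) * real (gamma G X (bconj_fm bs))" by (rule p(2))
      finally show "models (expand G X (A_Rp Asel R ps)) (bconj_fm bs)
               \<and> real (card (A_Rp Asel R ps)) \<le> (1 + \<epsilon>1) * (1 + \<epsilon>2) * real (gamma G X (bconj_fm bs))"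
        using as.sound(1)[OF adm] by blast
    qed
    then show ?thesis using p(1) by blast
  next
    case False
    have "admissible Asel l r bs = {}"
    proof (rule ccontr)
      assume "admissible Asel l r bs \<noteq> {}"
      then obtain R ps where adm: "(R, ps) \<in> admissible Asel l r bs" by auto
      show False using mono[OF as.sound(1)[OF adm] as.sound(2)[OF adm]] False by blast
    qed
    then show ?thesis using False by blast
  qed
qed


end
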